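(* Let $A\in \mathbb{R}^{m\times n}$ with $A^{\dagger}\geq 0$. Let $A=P_{1}-R_{1}+S_{1}$ and $A=P_{2}-R_{2}+S_{2}$ be two weak regular proper double splittings of $A$. Define $$W_{1}=\begin{pmatrix} P_{1}^{\dagger}R_{1} & -P_{1}^{\dagger}S_{1}\\ I & 0\end{pmatrix},\qquad W_{2}=\begin{pmatrix} P_{2}^{\dagger}R_{2} & -P_{2}^{\dagger}S_{2}\\ I & 0\end{pmatrix}\in\mathbb{R}^{2n\times 2n},$$ where $I$ is the $n\times n$ identity matrix. If $P_{1}^{\dagger}A\geq P_{2}^{\dagger}A$ and at least one of the conditions (i) $P_{1}^{\dagger}R_{1}\geq P_{2}^{\dagger}R_{2}$, (ii) $P_{1}^{\dagger}S_{1}\geq P_{2}^{\dagger}S_{2}$ holds, then $\rho(W_{1})\leq \rho(W_{2})< 1$.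
   Context: $A^{\dagger}$ denotes the Moore–Penrose inverse of $A$. For real matrices, $B\geq 0$ means all entries of $B$ are nonnegative, and $B\geq C$ means $B-C\geq 0$. $\rho(\cdot)$ denotes the spectral radius. For $A\in\mathbb{R}^{m\times n}$, a decomposition $A=P-R+S$ with $P,R,S\in\mathbb{R}^{m\times n}$ is a proper double splitting if $\mathcal{R}(A)=\mathcal{R}(P)$ and $\mathcal{N}(A)=\mathcal{N}(P)$. A proper double splitting is called weak regular if $P^{\dagger}\geq 0$, $P^{\dagger}R\geq 0$ and $-P^{\dagger}S\geq 0$. *)

theory Defs
  imports "Jordan_Normal_Form.Spectral_Radius"
begin

definition is_mp_inverse :: "real mat \<Rightarrow> real mat \<Rightarrow> bool" where
  "is_mp_inverse A X \<longleftrightarrow> X \<in> carrier_mat (dim_col A) (dim_row A) \<and>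
     A * X * A = A \<and> X * A * X = X \<and>
     transpose_mat (A * X) = A * X \<and> transpose_mat (X * A) = X * A"

definition mp_inv :: "real mat \<Rightarrow> real mat" where
  "mp_inv A = (THE X. is_mp_inverse A X)"

definition nonneg_mat :: "real mat \<Rightarrow> bool" where
  "nonneg_mat B \<longleftrightarrow> (\<forall>i < dim_row B. \<forall>j < dim_col B. B $$ (i, j) \<ge> 0)"

definition ge_mat :: "real mat \<Rightarrow> real mat \<Rightarrow> bool" where
  "ge_mat B C \<longleftrightarrow> dim_row B = dim_row C \<and> dim_col B = dim_col C \<and> nonneg_mat (B - C)"

definition range_mat :: "real mat \<Rightarrow> real vec set" where
  "range_mat A = {A *\<^sub>v x | x. x \<in> carrier_vec (dim_col A)}"

definition null_mat :: "real mat \<Rightarrow> real vec set" where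
  "null_mat A = {x \<in> carrier_vec (dim_col A). A *\<^sub>v x = 0\<^sub>v (dim_row A)}"

definition proper_double_splitting ::
  "real mat \<Rightarrow> real mat \<Rightarrow> real mat \<Rightarrow> real mat \<Rightarrow> bool" where
  "proper_double_splitting A P R S \<longleftrightarrow>
     P \<in> carrier_mat (dim_row A) (dim_col A) \<and> R \<in> carrier_mat (dim_row A) (dim_col A) \<and>
     S \<in> carrier_mat (dim_row A) (dim_col A) \<and> A = P - R + S \<and>
     range_mat A = range_mat P \<and> null_mat A = null_mat P"

definition weak_regular_pds ::
  "real mat \<Rightarrow> real mat \<Rightarrow> real mat \<Rightarrow> real mat \<Rightarrow> bool" where
  "weak_regular_pds A P R S \<longleftrightarrow> proper_double_splitting A P R S \<and>
     nonneg_mat (mp_inv P) \<and> nonneg_mat (mp_inv P * R) \<and> nonneg_mat (- (mp_inv P * S))"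

definition iter_mat :: "nat \<Rightarrow> real mat \<Rightarrow> real mat \<Rightarrow> real mat \<Rightarrow> real mat" where
  "iter_mat n P R S = four_block_mat (mp_inv P * R) (- (mp_inv P * S)) (1\<^sub>m n) (0\<^sub>m n n)"

definition real_spectral_radius :: "real mat \<Rightarrow> real" where
  "real_spectral_radius W = spectral_radius (map_mat complex_of_real W)"

end

theory Submission
  imports Defs
begin


definition full_col :: "real mat \<Rightarrow> bool" where
  "full_col B \<longleftrightarrow> (\<forall>x \<in> carrier_vec (dim_col B). B *\<^sub>v x = 0\<^sub>v (dim_row B) \<longrightarrow> x = 0\<^sub>v (dim_col B))"

lemma mult_entry:
  assumes "A \<in> carrier_mat m k" "B \<in> carrier_mat k n" "i < m" "j < n"
  shows "(A * B) $$ (i, j) = (\<Sum>l<k. A $$ (i, l) * B $$ (l, j))"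
  using assms by (simp add: scalar_prod_def atLeast0LessThan)

lemma mulv_entry:
  assumes "A \<in> carrier_mat m k" "x \<in> carrier_vec k" "i < m"
  shows "(A *\<^sub>v x) $ i = (\<Sum>l<k. A $$ (i, l) * x $ l)"
  using assms by (simp add: scalar_prod_def atLeast0LessThan)

lemma frf:
  fixes A :: "real mat"
  assumes "A \<in> carrier_mat m n"
  shows "\<exists>r B C. B \<in> carrier_mat m r \<and> C \<in> carrier_mat r n \<and> A = B * C \<and>
     full_col B \<and> full_col (transpose_mat C)"
  using assms
proof (induction n arbitrary: A)
  case 0
  show ?case
    apply (rule exI[of _ 0], rule exI[of _ "0\<^sub>m m 0"], rule exI[of _ "0\<^sub>m 0 0"])
    using 0 by (auto simp: full_col_def)
next
  case (Suc n)
  define A' where "A' = mat m n (\<lambda>(i,j). A $$ (i,j))"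
  define a where "a = col A n"
  have A': "A' \<in> carrier_mat m n" unfolding A'_def by simp
  have a: "a \<in> carrier_vec m" using Suc.prems unfolding a_def by auto
  from Suc.IH[OF A'] obtain r B' C' where B': "B' \<in> carrier_mat m r" and C': "C' \<in> carrier_mat r n"
    and AB: "A' = B' * C'" and fB: "full_col B'" and fC: "full_col (transpose_mat C')" by blast
  have Aij: "A $$ (i,j) = (\<Sum>l<r. B' $$ (i, l) * C' $$ (l, j))" if "i < m" "j < n" for i j
  proof -
    have "A $$ (i,j) = A' $$ (i,j)" using that unfolding A'_def by simp
    also have "\<dots> = (\<Sum>l<r. B' $$ (i, l) * C' $$ (l, j))" unfolding AB
      by (rule mult_entry[OF B' C' that])
    finally show ?thesis .
  qed
  have Ain: "A $$ (i,n) = a $ i" if "i < m" for i using that Suc.prems unfolding a_def by auto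
  show ?case
  proof (cases "\<exists>y \<in> carrier_vec r. a = B' *\<^sub>v y")
    case True
    then obtain y where y: "y \<in> carrier_vec r" and ay: "a = B' *\<^sub>v y" by blast
    define C where "C = mat r (Suc n) (\<lambda>(k,j). if j < n then C' $$ (k,j) else y $ k)"
    have C: "C \<in> carrier_mat r (Suc n)" unfolding C_def by simp
    have "A = B' * C"
    proof (rule eq_matI)
      fix i j assume i: "i < dim_row (B' * C)" and j: "j < dim_col (B' * C)"
      hence i: "i < m" and j: "j < Suc n" using B' C by auto
      have "(B' * C) $$ (i,j) = (\<Sum>l<r. B' $$ (i, l) * C $$ (l, j))" by (rule mult_entry[OF B' C i j])
      also have "\<dots> = A $$ (i,j)"
      proof (cases "j < n")
        case True thus ?thesis using Aij[OF i True] unfolding C_def by simp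
      next
        case False hence jn: "j = n" using j by simp
        have "A $$ (i,j) = (B' *\<^sub>v y) $ i" using Ain[OF i] ay jn by simp
        also have "\<dots> = (\<Sum>l<r. B' $$ (i, l) * y $ l)" by (rule mulv_entry[OF B' y i])
        finally show ?thesis unfolding C_def using jn by simp
      qed
      finally show "A $$ (i,j) = (B' * C) $$ (i,j)" by simp
    qed (insert Suc.prems B' C, auto)
    moreover have "full_col (transpose_mat C)"
      unfolding full_col_def
    proof (intro ballI impI)
      fix z assume z: "z \<in> carrier_vec (dim_col (transpose_mat C))"
        and Cz: "transpose_mat C *\<^sub>v z = 0\<^sub>v (dim_row (transpose_mat C))"
      have z': "z \<in> carrier_vec r" using z C by simp
      have "transpose_mat C' *\<^sub>v z = 0\<^sub>v n"
      proof (rule eq_vecI)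
        fix j assume "j < dim_vec (0\<^sub>v n :: real vec)" hence j: "j < n" by simp
        have "(transpose_mat C' *\<^sub>v z) $ j = (\<Sum>l<r. transpose_mat C' $$ (j, l) * z $ l)"
          by (rule mulv_entry[OF _ z' j], insert C', simp)
        also have "\<dots> = (\<Sum>l<r. transpose_mat C $$ (j, l) * z $ l)"
          by (rule sum.cong, insert j C C', auto simp: C_def)
        also have "\<dots> = (transpose_mat C *\<^sub>v z) $ j"
          by (rule mulv_entry[symmetric, of _ "Suc n"], insert j C z', auto)
        also have "\<dots> = 0" using Cz j C by simp
        finally show "(transpose_mat C' *\<^sub>v z) $ j = 0\<^sub>v n $ j" using j by simp
      qed (insert C', simp)
      thus "z = 0\<^sub>v (dim_col (transpose_mat C))" using fC z' C C' unfolding full_col_def by auto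
    qed
    ultimately show ?thesis using B' C fB by blast
  next
    case False
    define B where "B = mat m (Suc r) (\<lambda>(i,k). if k < r then B' $$ (i,k) else a $ i)"
    define C where "C = mat (Suc r) (Suc n) (\<lambda>(k,j). if k < r then (if j < n then C' $$ (k,j) else 0)
        else (if j < n then 0 else 1))"
    have B: "B \<in> carrier_mat m (Suc r)" unfolding B_def by simp
    have C: "C \<in> carrier_mat (Suc r) (Suc n)" unfolding C_def by simp
    have "A = B * C"
    proof (rule eq_matI)
      fix i j assume i: "i < dim_row (B * C)" and j: "j < dim_col (B * C)"
      hence i: "i < m" and j: "j < Suc n" using B C by auto
      have "(B * C) $$ (i,j) = (\<Sum>l<Suc r. B $$ (i, l) * C $$ (l, j))" by (rule mult_entry[OF B C i j])
      also have "\<dots> = (\<Sum>l<r. B $$ (i, l) * C $$ (l, j)) + B $$ (i, r) * C $$ (r, j)" by simp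
      also have "\<dots> = A $$ (i,j)"
      proof (cases "j < n")
        case True thus ?thesis using Aij[OF i True] i unfolding B_def C_def by simp
      next
        case False hence jn: "j = n" using j by simp
        thus ?thesis using Ain[OF i] i unfolding B_def C_def by simp
      qed
      finally show "A $$ (i,j) = (B * C) $$ (i,j)" by simp
    qed (insert Suc.prems B C, auto)
    moreover have "full_col B"
      unfolding full_col_def
    proof (intro ballI impI)
      fix x assume x: "x \<in> carrier_vec (dim_col B)" and Bx: "B *\<^sub>v x = 0\<^sub>v (dim_row B)"
      have x': "x \<in> carrier_vec (Suc r)" using x B by simp
      have eq: "(\<Sum>l<r. B' $$ (i, l) * x $ l) + a $ i * x $ r = 0" if i: "i < m" for i
      proof -
        have "0 = (B *\<^sub>v x) $ i" using Bx i B by simp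
        also have "\<dots> = (\<Sum>l<Suc r. B $$ (i, l) * x $ l)" by (rule mulv_entry[OF B x' i])
        also have "\<dots> = (\<Sum>l<r. B' $$ (i, l) * x $ l) + a $ i * x $ r"
          using i unfolding B_def by simp
        finally show ?thesis by simp
      qed
      have xr: "x $ r = 0"
      proof (rule ccontr)
        assume nz: "x $ r \<noteq> 0"
        define y where "y = vec r (\<lambda>l. - x $ l / x $ r)"
        have y: "y \<in> carrier_vec r" unfolding y_def by simp
        have "a = B' *\<^sub>v y"
        proof (rule eq_vecI)
          fix i assume "i < dim_vec (B' *\<^sub>v y)" hence i: "i < m" using B' by simp
          have "(B' *\<^sub>v y) $ i = (\<Sum>l<r. B' $$ (i, l) * y $ l)" by (rule mulv_entry[OF B' y i])
          also have "\<dots> = (\<Sum>l<r. B' $$ (i, l) * x $ l) * (- 1 / x $ r)"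
            unfolding sum_distrib_right y_def by (rule sum.cong, auto)
          also have "\<dots> = a $ i" using eq[OF i] nz by (simp add: field_simps)
          finally show "a $ i = (B' *\<^sub>v y) $ i" by simp
        qed (insert a B', simp)
        thus False using False y by blast
      qed
      define x' where "x' = vec r (\<lambda>l. x $ l)"
      have x'c: "x' \<in> carrier_vec r" unfolding x'_def by simp
      have "B' *\<^sub>v x' = 0\<^sub>v m"
      proof (rule eq_vecI)
        fix i assume "i < dim_vec (0\<^sub>v m :: real vec)" hence i: "i < m" by simp
        have "(B' *\<^sub>v x') $ i = (\<Sum>l<r. B' $$ (i, l) * x' $ l)" by (rule mulv_entry[OF B' x'c i])
        also have "\<dots> = (\<Sum>l<r. B' $$ (i, l) * x $ l)" unfolding x'_def by (rule sum.cong, auto)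
        also have "\<dots> = 0" using eq[OF i] xr by simp
        finally show "(B' *\<^sub>v x') $ i = 0\<^sub>v m $ i" using i by simp
      qed (insert B', simp)
      hence "x' = 0\<^sub>v r" using fB x'c B' unfolding full_col_def by auto
      hence "x $ l = 0" if "l < r" for l using that unfolding x'_def by (metis index_vec index_zero_vec(1))
      with xr show "x = 0\<^sub>v (dim_col B)"
        by (intro eq_vecI, insert x' B, auto simp: less_Suc_eq)
    qed
    moreover have "full_col (transpose_mat C)"
      unfolding full_col_def
    proof (intro ballI impI)
      fix z assume z: "z \<in> carrier_vec (dim_col (transpose_mat C))"
        and Cz: "transpose_mat C *\<^sub>v z = 0\<^sub>v (dim_row (transpose_mat C))"
      have zc: "z \<in> carrier_vec (Suc r)" using z C by simp
      have ent: "(\<Sum>l<Suc r. C $$ (l, j) * z $ l) = 0" if j: "j < Suc n" for j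
      proof -
        have "(transpose_mat C *\<^sub>v z) $ j = (\<Sum>l<Suc r. transpose_mat C $$ (j, l) * z $ l)"
          by (rule mulv_entry[OF _ zc], insert j C, auto)
        also have "\<dots> = (\<Sum>l<Suc r. C $$ (l, j) * z $ l)"
          by (rule sum.cong, insert j C, auto)
        finally show ?thesis using Cz j C by simp
      qed
      have zr: "z $ r = 0" using ent[of n] unfolding C_def by simp
      define z' where "z' = vec r (\<lambda>l. z $ l)"
      have z'c: "z' \<in> carrier_vec r" unfolding z'_def by simp
      have "transpose_mat C' *\<^sub>v z' = 0\<^sub>v n"
      proof (rule eq_vecI)
        fix j assume "j < dim_vec (0\<^sub>v n :: real vec)" hence j: "j < n" by simp
        have "(transpose_mat C' *\<^sub>v z') $ j = (\<Sum>l<r. transpose_mat C' $$ (j, l) * z' $ l)"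
          by (rule mulv_entry[OF _ z'c j], insert C', simp)
        also have "\<dots> = (\<Sum>l<r. C $$ (l, j) * z $ l)"
          by (rule sum.cong, insert j C C', auto simp: C_def z'_def)
        also have "\<dots> = (\<Sum>l<Suc r. C $$ (l, j) * z $ l)" using zr by simp
        also have "\<dots> = 0" using ent j by simp
        finally show "(transpose_mat C' *\<^sub>v z') $ j = 0\<^sub>v n $ j" using j by simp
      qed (insert C', simp)
      hence "z' = 0\<^sub>v r" using fC z'c C' unfolding full_col_def by auto
      hence "z $ l = 0" if "l < r" for l using that unfolding z'_def by (metis index_vec index_zero_vec(1))
      with zr show "z = 0\<^sub>v (dim_col (transpose_mat C))"
        by (intro eq_vecI, insert zc C, auto simp: less_Suc_eq)
    qed
    ultimately show ?thesis using B C by blast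
  qed
qed


lemma self_dot_zero:
  fixes w :: "real vec"
  assumes "w \<bullet> w = 0"
  shows "w = 0\<^sub>v (dim_vec w)"
proof -
  have "(\<Sum>i\<in>{0..<dim_vec w}. w $ i * w $ i) = 0" using assms unfolding scalar_prod_def by simp
  hence "\<forall>i\<in>{0..<dim_vec w}. w $ i * w $ i = 0"
    by (subst sum_nonneg_eq_0_iff[symmetric], auto)
  thus ?thesis by (intro eq_vecI, auto)
qed

lemma gram_inv:
  fixes B :: "real mat"
  assumes B: "B \<in> carrier_mat m r" and fB: "full_col B"
  shows "\<exists>L. L \<in> carrier_mat r r \<and> L * (transpose_mat B * B) = 1\<^sub>m r \<and>
     (transpose_mat B * B) * L = 1\<^sub>m r \<and> transpose_mat L = L"
proof -
  define K where "K = transpose_mat B * B"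
  have K: "K \<in> carrier_mat r r" unfolding K_def using B by auto
  have "det K \<noteq> 0"
  proof
    assume "det K = 0"
    from this[unfolded det_0_iff_vec_prod_zero[OF K]] obtain v where v: "v \<in> carrier_vec r"
      and nz: "v \<noteq> 0\<^sub>v r" and Kv: "K *\<^sub>v v = 0\<^sub>v r" by blast
    have Bv: "B *\<^sub>v v \<in> carrier_vec m" using B v by auto
    have "(B *\<^sub>v v) \<bullet> (B *\<^sub>v v) = (transpose_mat B *\<^sub>v (B *\<^sub>v v)) \<bullet> v"
      by (rule transpose_vec_mult_scalar[symmetric, OF B v Bv])
    also have "transpose_mat B *\<^sub>v (B *\<^sub>v v) = K *\<^sub>v v" unfolding K_def using B v by simp
    also have "\<dots> \<bullet> v = 0" using Kv v by simp
    finally have "B *\<^sub>v v = 0\<^sub>v m" using self_dot_zero[of "B *\<^sub>v v"] B by simp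
    hence "v = 0\<^sub>v r" using fB v B unfolding full_col_def by auto
    with nz show False by simp
  qed
  from det_non_zero_imp_unit[OF K this, of "()"]
  obtain L where L: "L \<in> carrier_mat r r" and LK: "L * K = 1\<^sub>m r" and KL: "K * L = 1\<^sub>m r"
    unfolding Units_def ring_mat_def by auto
  have KT: "transpose_mat K = K" unfolding K_def using B by (simp add: transpose_mult[of _ r m])
  have "transpose_mat L * K = 1\<^sub>m r"
    using arg_cong[OF KL, of transpose_mat] transpose_mult[OF K L] KT by simp
  have "transpose_mat L = transpose_mat L * (K * L)" using L KL by simp
  also have "\<dots> = (transpose_mat L * K) * L" using L K by (simp add: assoc_mult_mat[of _ r r])
  also have "\<dots> = L" using \<open>transpose_mat L * K = 1\<^sub>m r\<close> L by simp
  finally show ?thesis using L LK KL unfolding K_def by blast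
qed


lemma mp_exists:
  fixes A :: "real mat"
  shows "\<exists>X. is_mp_inverse A X"
proof -
  define m n where "m = dim_row A" and "n = dim_col A"
  have A: "A \<in> carrier_mat m n" unfolding m_def n_def by auto
  from frf[OF A] obtain r B C where B: "B \<in> carrier_mat m r" and C: "C \<in> carrier_mat r n"
    and ABC: "A = B * C" and fB: "full_col B" and fC: "full_col (transpose_mat C)" by blast
  have CT: "transpose_mat C \<in> carrier_mat n r" using C by simp
  have BT: "transpose_mat B \<in> carrier_mat r m" using B by simp
  from gram_inv[OF B fB] obtain L1 where L1: "L1 \<in> carrier_mat r r"
    and L1a: "L1 * (transpose_mat B * B) = 1\<^sub>m r" and L1s: "transpose_mat L1 = L1" by blast
  from gram_inv[OF CT fC] obtain L2 where L2: "L2 \<in> carrier_mat r r"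
    and L2a: "L2 * (C * transpose_mat C) = 1\<^sub>m r"
    and L2b: "(C * transpose_mat C) * L2 = 1\<^sub>m r" and L2s: "transpose_mat L2 = L2" by auto
  define Y where "Y = L1 * transpose_mat B"
  have Y: "Y \<in> carrier_mat r m" unfolding Y_def using L1 BT by auto
  define Z where "Z = L2 * Y"
  have Z: "Z \<in> carrier_mat r m" unfolding Z_def using L2 Y by auto
  define X where "X = transpose_mat C * Z"
  have X: "X \<in> carrier_mat n m" unfolding X_def using CT Z by auto
  have CC: "C * transpose_mat C \<in> carrier_mat r r" using C CT by auto
  have CX: "C * X = Y"
  proof -
    have "C * X = (C * transpose_mat C) * Z"
      unfolding X_def by (rule assoc_mult_mat[OF C CT Z, symmetric])
    also have "\<dots> = ((C * transpose_mat C) * L2) * Y"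
      unfolding Z_def by (rule assoc_mult_mat[OF CC L2 Y, symmetric])
    also have "\<dots> = Y" using L2b Y by simp
    finally show ?thesis .
  qed
  have YB: "Y * B = 1\<^sub>m r"
    unfolding Y_def using assoc_mult_mat[OF L1 BT B] L1a by simp
  have XB: "X * B = transpose_mat C * L2"
  proof -
    have "X * B = transpose_mat C * (Z * B)"
      unfolding X_def by (rule assoc_mult_mat[OF CT Z B])
    also have "Z * B = L2 * (Y * B)" unfolding Z_def by (rule assoc_mult_mat[OF L2 Y B])
    finally show ?thesis using YB L2 by simp
  qed
  define Q where "Q = B * Y"
  define F where "F = transpose_mat C * (L2 * C)"
  have AX: "A * X = Q" unfolding ABC Q_def
    using assoc_mult_mat[OF B C X] CX by simp
  have XA: "X * A = F" unfolding ABC F_def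
    using assoc_mult_mat[OF X B C, symmetric] XB assoc_mult_mat[OF CT L2 C] by simp
  have Qs: "transpose_mat Q = Q" unfolding Q_def Y_def
    using transpose_mult[OF B Y] transpose_mult[OF L1 BT] L1s assoc_mult_mat[OF B L1 BT]
    unfolding Y_def by simp
  have Fs: "transpose_mat F = F" 
  proof -
    have LC: "L2 * C \<in> carrier_mat r n" using L2 C by auto
    show ?thesis unfolding F_def
    using transpose_mult[OF CT LC] transpose_mult[OF L2 C] L2s L2 C
      assoc_mult_mat[OF CT L2 C] by simp
  qed
  have AXA: "A * X * A = A"
  proof -
    have "A * X * A = B * Y * (B * C)" using AX ABC Q_def by simp
    also have "\<dots> = B * (Y * (B * C))" by (rule assoc_mult_mat[OF B Y], insert B C, auto)
    also have "Y * (B * C) = (Y * B) * C" by (rule assoc_mult_mat[OF Y B C, symmetric])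
    finally show ?thesis using YB C ABC B by simp
  qed
  have XAX: "X * A * X = X"
  proof -
    have LC: "L2 * C \<in> carrier_mat r n" using L2 C by auto
    have "X * A * X = transpose_mat C * (L2 * C) * X" using XA F_def by simp
    also have "\<dots> = transpose_mat C * ((L2 * C) * X)" by (rule assoc_mult_mat[OF CT LC X])
    also have "(L2 * C) * X = L2 * (C * X)" by (rule assoc_mult_mat[OF L2 C X])
    finally show ?thesis using CX Z_def X_def by simp
  qed
  show ?thesis unfolding is_mp_inverse_def
    by (rule exI[of _ X], insert X AXA XAX AX XA Qs Fs, auto simp: m_def n_def)
qed


lemma mp_unique:
  fixes A X Y :: "real mat"
  assumes hX: "is_mp_inverse A X" and hY: "is_mp_inverse A Y"
  shows "X = Y"
proof -
  define m n where "m = dim_row A" and "n = dim_col A"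
  have A: "A \<in> carrier_mat m n" unfolding m_def n_def by auto
  have X: "X \<in> carrier_mat n m" and Y: "Y \<in> carrier_mat n m"
    using hX hY unfolding is_mp_inverse_def m_def n_def by auto
  have AT: "transpose_mat A \<in> carrier_mat n m" using A by simp
  have XT: "transpose_mat X \<in> carrier_mat m n" using X by simp
  have YT: "transpose_mat Y \<in> carrier_mat m n" using Y by simp
  have AX: "A * X \<in> carrier_mat m m" using A X by auto
  have AY: "A * Y \<in> carrier_mat m m" using A Y by auto
  have XA: "X * A \<in> carrier_mat n n" using A X by auto
  have YA: "Y * A \<in> carrier_mat n n" using A Y by auto
  note dX = hX[unfolded is_mp_inverse_def] and dY = hY[unfolded is_mp_inverse_def]
  have e1: "transpose_mat X * transpose_mat A = A * X"
    using transpose_mult[OF A X] dX by simp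
  have e2: "transpose_mat A * (A * Y) = transpose_mat A"
    using transpose_mult[OF AY A] dY by simp
  have e3: "transpose_mat A * transpose_mat Y = Y * A"
    using transpose_mult[OF Y A] dY by simp
  have e4: "(X * A) * transpose_mat A = transpose_mat A"
  proof -
    have "A * X * A = A * (X * A)" by (rule assoc_mult_mat[OF A X A])
    hence "transpose_mat A = transpose_mat (A * (X * A))" using dX by simp
    also have "\<dots> = transpose_mat (X * A) * transpose_mat A" by (rule transpose_mult[OF A XA])
    finally show ?thesis using dX by simp
  qed
  have "X = X * A * X" using dX by simp
  also have "\<dots> = X * (A * X)" by (rule assoc_mult_mat[OF X A X])
  also have "\<dots> = X * (transpose_mat X * transpose_mat A)" using e1 by simp
  also have "\<dots> = X * (transpose_mat X * (transpose_mat A * (A * Y)))" using e2 by simp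
  also have "transpose_mat X * (transpose_mat A * (A * Y)) = (transpose_mat X * transpose_mat A) * (A * Y)"
    by (rule assoc_mult_mat[OF XT AT AY, symmetric])
  also have "\<dots> = (A * X) * (A * Y)" using e1 by simp
  also have "\<dots> = A * (X * (A * Y))" by (rule assoc_mult_mat[OF A X AY])
  also have "X * (A * (X * (A * Y))) = (X * A) * (X * (A * Y))"
    by (rule assoc_mult_mat[OF X A, symmetric], insert X AY, auto)
  also have "\<dots> = ((X * A) * X) * (A * Y)" by (rule assoc_mult_mat[OF XA X AY, symmetric])
  finally have 1: "X = X * (A * Y)" using dX by simp
  have "Y = Y * A * Y" using dY by simp
  also have "\<dots> = (transpose_mat A * transpose_mat Y) * Y" using e3 by simp
  also have "\<dots> = (((X * A) * transpose_mat A) * transpose_mat Y) * Y" using e4 by simp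
  also have "((X * A) * transpose_mat A) * transpose_mat Y = (X * A) * (transpose_mat A * transpose_mat Y)"
    by (rule assoc_mult_mat[OF XA AT YT])
  also have "\<dots> = (X * A) * (Y * A)" using e3 by simp
  also have "\<dots> * Y = (X * A) * ((Y * A) * Y)" by (rule assoc_mult_mat[OF XA YA Y])
  also have "\<dots> = (X * A) * Y" using dY by simp
  also have "\<dots> = X * (A * Y)" by (rule assoc_mult_mat[OF X A Y])
  finally show ?thesis using 1 by simp
qed

lemma mp_inv_props:
  fixes A :: "real mat"
  shows "is_mp_inverse A (mp_inv A)"
  unfolding mp_inv_def
  by (rule theI', insert mp_exists mp_unique, blast)



lemma mat_vec_zero[simp]:
  fixes B :: "'a :: comm_ring_1 mat"
  assumes "B \<in> carrier_mat m n"
  shows "B *\<^sub>v 0\<^sub>v n = 0\<^sub>v m"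
  by (rule eq_vecI, insert assms, auto)

lemma vec_minus_zero:
  fixes a b :: "real vec"
  assumes "a \<in> carrier_vec n" "b \<in> carrier_vec n" "a - b = 0\<^sub>v n"
  shows "a = b"
proof (rule eq_vecI)
  fix i assume i: "i < dim_vec b"
  have "(a - b) $ i = 0" using assms i by simp
  moreover have "(a - b) $ i = a $ i - b $ i" using assms i by (intro index_minus_vec(1), auto)
  ultimately show "a $ i = b $ i" by simp
qed (insert assms, auto)

lemma mat_eq_vec:
  fixes M N :: "real mat"
  assumes M: "M \<in> carrier_mat m n" and N: "N \<in> carrier_mat m n"
    and h: "\<And>x. x \<in> carrier_vec n \<Longrightarrow> M *\<^sub>v x = N *\<^sub>v x"
  shows "M = N"
proof (rule eq_matI)
  fix i j assume i: "i < dim_row N" and j: "j < dim_col N"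
  have "M $$ (i,j) = (M *\<^sub>v unit_vec n j) $ i" using M N i j by simp
  also have "\<dots> = (N *\<^sub>v unit_vec n j) $ i" using h[of "unit_vec n j"] by simp
  also have "\<dots> = N $$ (i,j)" using M N i j by simp
  finally show "M $$ (i,j) = N $$ (i,j)" .
qed (insert M N, auto)

lemma proj_null_eq:
  fixes E F :: "real mat"
  assumes E: "E \<in> carrier_mat n n" and F: "F \<in> carrier_mat n n"
    and EE: "E * E = E" and FF: "F * F = F" and Es: "transpose_mat E = E" and Fs: "transpose_mat F = F"
    and h1: "\<And>x. x \<in> carrier_vec n \<Longrightarrow> E *\<^sub>v x = 0\<^sub>v n \<Longrightarrow> F *\<^sub>v x = 0\<^sub>v n"
    and h2: "\<And>x. x \<in> carrier_vec n \<Longrightarrow> F *\<^sub>v x = 0\<^sub>v n \<Longrightarrow> E *\<^sub>v x = 0\<^sub>v n"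
  shows "E = F"
proof -
  have gen: "G = G * H" if G: "G \<in> carrier_mat n n" and H: "H \<in> carrier_mat n n" and HH: "H * H = H"
    and hh: "\<And>x. x \<in> carrier_vec n \<Longrightarrow> H *\<^sub>v x = 0\<^sub>v n \<Longrightarrow> G *\<^sub>v x = 0\<^sub>v n" for G H :: "real mat"
  proof (rule mat_eq_vec[OF G])
    show "G * H \<in> carrier_mat n n" using G H by auto
    fix x :: "real vec" assume x: "x \<in> carrier_vec n"
    have Hx: "H *\<^sub>v x \<in> carrier_vec n" using H x by auto
    have "H *\<^sub>v (x - H *\<^sub>v x) = H *\<^sub>v x - H *\<^sub>v (H *\<^sub>v x)"
      by (rule mult_minus_distrib_mat_vec[OF H x Hx])
    also have "H *\<^sub>v (H *\<^sub>v x) = H *\<^sub>v x" using assoc_mult_mat_vec[OF H H x] HH by simp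
    finally have "H *\<^sub>v (x - H *\<^sub>v x) = 0\<^sub>v n" using Hx by simp
    hence "G *\<^sub>v (x - H *\<^sub>v x) = 0\<^sub>v n" using hh x Hx by simp
    moreover have "G *\<^sub>v (x - H *\<^sub>v x) = G *\<^sub>v x - G *\<^sub>v (H *\<^sub>v x)"
      by (rule mult_minus_distrib_mat_vec[OF G x Hx])
    ultimately have "G *\<^sub>v x = G *\<^sub>v (H *\<^sub>v x)" using G x Hx vec_minus_zero[of "G *\<^sub>v x" n "G *\<^sub>v (H *\<^sub>v x)"]
      by simp
    thus "G *\<^sub>v x = (G * H) *\<^sub>v x" using assoc_mult_mat_vec[OF G H x] by simp
  qed
  have 1: "F = F * E" by (rule gen[OF F E EE h1])
  have 2: "E = E * F" by (rule gen[OF E F FF h2])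
  have "E = transpose_mat E" using Es by simp
  also have "\<dots> = transpose_mat (E * F)" using 2 by simp
  also have "\<dots> = transpose_mat F * transpose_mat E" by (rule transpose_mult[OF E F])
  also have "\<dots> = F" using Es Fs 1 by simp
  finally show ?thesis .
qed

lemma proj_range_eq:
  fixes E F :: "real mat"
  assumes E: "E \<in> carrier_mat n n" and F: "F \<in> carrier_mat n n"
    and EE: "E * E = E" and FF: "F * F = F" and Es: "transpose_mat E = E" and Fs: "transpose_mat F = F"
    and h1: "\<And>x. x \<in> carrier_vec n \<Longrightarrow> \<exists>y \<in> carrier_vec n. E *\<^sub>v x = F *\<^sub>v y"
    and h2: "\<And>x. x \<in> carrier_vec n \<Longrightarrow> \<exists>y \<in> carrier_vec n. F *\<^sub>v x = E *\<^sub>v y"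
  shows "E = F"
proof -
  have gen: "G = H * G" if G: "G \<in> carrier_mat n n" and H: "H \<in> carrier_mat n n" and HH: "H * H = H"
    and hh: "\<And>x. x \<in> carrier_vec n \<Longrightarrow> \<exists>y \<in> carrier_vec n. G *\<^sub>v x = H *\<^sub>v y" for G H :: "real mat"
  proof (rule mat_eq_vec[OF G])
    show "H * G \<in> carrier_mat n n" using G H by auto
    fix x :: "real vec" assume x: "x \<in> carrier_vec n"
    from hh[OF x] obtain y where y: "y \<in> carrier_vec n" and e: "G *\<^sub>v x = H *\<^sub>v y" by blast
    have "(H * G) *\<^sub>v x = H *\<^sub>v (G *\<^sub>v x)" by (rule assoc_mult_mat_vec[OF H G x])
    also have "\<dots> = (H * H) *\<^sub>v y" unfolding e by (rule assoc_mult_mat_vec[OF H H y, symmetric])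
    also have "\<dots> = G *\<^sub>v x" using HH e by simp
    finally show "G *\<^sub>v x = (H * G) *\<^sub>v x" by simp
  qed
  have 1: "E = F * E" by (rule gen[OF E F FF h1])
  have 2: "F = E * F" by (rule gen[OF F E EE h2])
  have "E = transpose_mat E" using Es by simp
  also have "\<dots> = transpose_mat (F * E)" using 1 by simp
  also have "\<dots> = transpose_mat E * transpose_mat F" by (rule transpose_mult[OF F E])
  also have "\<dots> = F" using Es Fs 2 by simp
  finally show ?thesis .
qed

lemma mp_basic:
  fixes A :: "real mat"
  assumes A: "A \<in> carrier_mat m n"
  shows "mp_inv A \<in> carrier_mat n m" "A * mp_inv A * A = A" "mp_inv A * A * mp_inv A = mp_inv A"
    "transpose_mat (A * mp_inv A) = A * mp_inv A" "transpose_mat (mp_inv A * A) = mp_inv A * A"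
  using mp_inv_props[of A] A unfolding is_mp_inverse_def by auto

lemma mp_idem:
  fixes A :: "real mat"
  assumes A: "A \<in> carrier_mat m n"
  shows "(mp_inv A * A) * (mp_inv A * A) = mp_inv A * A"
    "(A * mp_inv A) * (A * mp_inv A) = A * mp_inv A"
proof -
  note X = mp_basic(1)[OF A] and b = mp_basic[OF A]
  have XA: "mp_inv A * A \<in> carrier_mat n n" using X A by auto
  have AX: "A * mp_inv A \<in> carrier_mat m m" using X A by auto
  show "(mp_inv A * A) * (mp_inv A * A) = mp_inv A * A"
    using assoc_mult_mat[OF XA X A, symmetric] b(3) by simp
  show "(A * mp_inv A) * (A * mp_inv A) = A * mp_inv A"
    using assoc_mult_mat[OF AX A X, symmetric] b(2) by simp
qed

lemma mp_null_proj:
  fixes A P :: "real mat"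
  assumes A: "A \<in> carrier_mat m n" and P: "P \<in> carrier_mat m n" and N: "null_mat A = null_mat P"
  shows "mp_inv P * P = mp_inv A * A"
proof -
  have ker: "(mp_inv B * B) *\<^sub>v x = 0\<^sub>v n \<longleftrightarrow> B *\<^sub>v x = 0\<^sub>v m"
    if B: "B \<in> carrier_mat m n" and x: "x \<in> carrier_vec n" for B :: "real mat" and x
  proof
    note X = mp_basic(1)[OF B]
    assume h: "(mp_inv B * B) *\<^sub>v x = 0\<^sub>v n"
    have "B *\<^sub>v x = (B * mp_inv B * B) *\<^sub>v x" using mp_basic(2)[OF B] by simp
    also have "\<dots> = B *\<^sub>v ((mp_inv B * B) *\<^sub>v x)"
      using assoc_mult_mat[OF B X B] assoc_mult_mat_vec[OF B _ x, of "mp_inv B * B"] X B by auto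
    finally show "B *\<^sub>v x = 0\<^sub>v m" using h B by simp
  next
    note X = mp_basic(1)[OF B]
    assume "B *\<^sub>v x = 0\<^sub>v m"
    thus "(mp_inv B * B) *\<^sub>v x = 0\<^sub>v n" using assoc_mult_mat_vec[OF X B x] X by simp
  qed
  have nA: "A *\<^sub>v x = 0\<^sub>v m \<longleftrightarrow> P *\<^sub>v x = 0\<^sub>v m" if "x \<in> carrier_vec n" for x
    using N that A P unfolding null_mat_def by (auto simp: set_eq_iff)
  have XA: "mp_inv A * A \<in> carrier_mat n n" using mp_basic(1)[OF A] A by auto
  have XP: "mp_inv P * P \<in> carrier_mat n n" using mp_basic(1)[OF P] P by auto
  show ?thesis
  proof (rule proj_null_eq[OF XP XA mp_idem(1)[OF P] mp_idem(1)[OF A] mp_basic(5)[OF P] mp_basic(5)[OF A]])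
    fix x :: "real vec" assume x: "x \<in> carrier_vec n"
    show "mp_inv P * P *\<^sub>v x = 0\<^sub>v n \<Longrightarrow> mp_inv A * A *\<^sub>v x = 0\<^sub>v n"
      using ker[OF A x] ker[OF P x] nA[OF x] by blast
    show "mp_inv A * A *\<^sub>v x = 0\<^sub>v n \<Longrightarrow> mp_inv P * P *\<^sub>v x = 0\<^sub>v n"
      using ker[OF A x] ker[OF P x] nA[OF x] by blast
  qed
qed

lemma mp_range_proj:
  fixes A P :: "real mat"
  assumes A: "A \<in> carrier_mat m n" and P: "P \<in> carrier_mat m n" and R: "range_mat A = range_mat P"
  shows "P * mp_inv P = A * mp_inv A"
proof -
  have rng: "(\<exists>y \<in> carrier_vec m. z = (B * mp_inv B) *\<^sub>v y) \<longleftrightarrow> (\<exists>y \<in> carrier_vec n. z = B *\<^sub>v y)"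
    if B: "B \<in> carrier_mat m n" for B :: "real mat" and z
  proof
    note X = mp_basic(1)[OF B]
    assume "\<exists>y \<in> carrier_vec m. z = (B * mp_inv B) *\<^sub>v y"
    then obtain y where y: "y \<in> carrier_vec m" and z: "z = (B * mp_inv B) *\<^sub>v y" by blast
    have "z = B *\<^sub>v (mp_inv B *\<^sub>v y)" using z assoc_mult_mat_vec[OF B X y] by simp
    moreover have "mp_inv B *\<^sub>v y \<in> carrier_vec n" using X y by simp
    ultimately show "\<exists>y \<in> carrier_vec n. z = B *\<^sub>v y" by blast
  next
    note X = mp_basic(1)[OF B]
    assume "\<exists>y \<in> carrier_vec n. z = B *\<^sub>v y"
    then obtain y where y: "y \<in> carrier_vec n" and z: "z = B *\<^sub>v y" by blast
    have "z = (B * mp_inv B * B) *\<^sub>v y" using z mp_basic(2)[OF B] by simp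
    also have "\<dots> = (B * mp_inv B) *\<^sub>v (B *\<^sub>v y)"
      by (rule assoc_mult_mat_vec, insert B X y, auto)
    finally have "z = (B * mp_inv B) *\<^sub>v (B *\<^sub>v y)" .
    moreover have "B *\<^sub>v y \<in> carrier_vec m" using B y by simp
    ultimately show "\<exists>y \<in> carrier_vec m. z = (B * mp_inv B) *\<^sub>v y" by blast
  qed
  have rA: "(\<exists>y \<in> carrier_vec n. z = A *\<^sub>v y) \<longleftrightarrow> (\<exists>y \<in> carrier_vec n. z = P *\<^sub>v y)" for z
    using R A P unfolding range_mat_def by (auto simp: set_eq_iff)
  have AX: "A * mp_inv A \<in> carrier_mat m m" using mp_basic(1)[OF A] A by auto
  have PX: "P * mp_inv P \<in> carrier_mat m m" using mp_basic(1)[OF P] P by auto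
  show ?thesis
  proof (rule proj_range_eq[OF PX AX mp_idem(2)[OF P] mp_idem(2)[OF A] mp_basic(4)[OF P] mp_basic(4)[OF A]])
    fix x :: "real vec" assume x: "x \<in> carrier_vec m"
    show "\<exists>y\<in>carrier_vec m. P * mp_inv P *\<^sub>v x = A * mp_inv A *\<^sub>v y"
    proof -
      have "\<exists>y\<in>carrier_vec m. P * mp_inv P *\<^sub>v x = P * mp_inv P *\<^sub>v y" using x by blast
      hence "\<exists>y\<in>carrier_vec n. P * mp_inv P *\<^sub>v x = P *\<^sub>v y" using rng[OF P] by blast
      hence "\<exists>y\<in>carrier_vec n. P * mp_inv P *\<^sub>v x = A *\<^sub>v y" using rA by blast
      hence "\<exists>y\<in>carrier_vec m. P * mp_inv P *\<^sub>v x = A * mp_inv A *\<^sub>v y" using rng[OF A] by blast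
      thus ?thesis by blast
    qed
    show "\<exists>y\<in>carrier_vec m. A * mp_inv A *\<^sub>v x = P * mp_inv P *\<^sub>v y"
    proof -
      have "\<exists>y\<in>carrier_vec m. A * mp_inv A *\<^sub>v x = A * mp_inv A *\<^sub>v y" using x by blast
      hence "\<exists>y\<in>carrier_vec n. A * mp_inv A *\<^sub>v x = A *\<^sub>v y" using rng[OF A] by blast
      hence "\<exists>y\<in>carrier_vec n. A * mp_inv A *\<^sub>v x = P *\<^sub>v y" using rA by blast
      hence "\<exists>y\<in>carrier_vec m. A * mp_inv A *\<^sub>v x = P * mp_inv P *\<^sub>v y" using rng[OF P] by blast
      thus ?thesis by blast
    qed
  qed
qed



lemma sum_split_add:
  fixes k :: nat
  shows "(\<Sum>j<n+k. f j) = (\<Sum>j<n. f j) + (\<Sum>j<k. f (n + j))"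
  by (induction k, auto simp: add.assoc)

definition Wm :: "nat \<Rightarrow> real mat \<Rightarrow> real mat \<Rightarrow> complex mat" where
  "Wm n T U = map_mat complex_of_real (four_block_mat T U (1\<^sub>m n) (0\<^sub>m n n))"

lemma Wm_carrier: "T \<in> carrier_mat n n \<Longrightarrow> Wm n T U \<in> carrier_mat (n+n) (n+n)"
  unfolding Wm_def by auto

lemma Wm_entries:
  assumes T: "T \<in> carrier_mat n n" and U: "U \<in> carrier_mat n n" and i: "i < n" and j: "j < n"
  shows "Wm n T U $$ (i, j) = complex_of_real (T $$ (i,j))"
    "Wm n T U $$ (i, n + j) = complex_of_real (U $$ (i,j))"
    "Wm n T U $$ (n + i, j) = (if i = j then 1 else 0)"
    "Wm n T U $$ (n + i, n + j) = 0"
  using assms unfolding Wm_def by auto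

lemma Wm_right:
  assumes T: "T \<in> carrier_mat n n" and U: "U \<in> carrier_mat n n"
    and Tn: "\<And>i j. i < n \<Longrightarrow> j < n \<Longrightarrow> T $$ (i,j) \<ge> 0"
    and Un: "\<And>i j. i < n \<Longrightarrow> j < n \<Longrightarrow> U $$ (i,j) \<ge> 0"
    and ev: "eigenvalue (Wm n T U) \<mu>"
  shows "\<exists>u. (\<forall>i<n. u i \<ge> 0) \<and> (\<exists>i<n. u i > 0) \<and>
    (\<forall>i<n. cmod \<mu> ^ 2 * u i \<le> cmod \<mu> * (\<Sum>j<n. T $$ (i,j) * u j) + (\<Sum>j<n. U $$ (i,j) * u j))"
proof -
  let ?W = "Wm n T U"
  have W: "?W \<in> carrier_mat (n+n) (n+n)" by (rule Wm_carrier[OF T])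
  from ev obtain v where v: "v \<in> carrier_vec (n+n)" and vnz: "v \<noteq> 0\<^sub>v (n+n)"
    and Wv: "?W *\<^sub>v v = \<mu> \<cdot>\<^sub>v v" unfolding eigenvalue_def eigenvector_def using W by auto
  have row: "(\<Sum>j<n+n. ?W $$ (i,j) * v $ j) = \<mu> * v $ i" if i: "i < n + n" for i
  proof -
    have "(\<Sum>j<n+n. ?W $$ (i,j) * v $ j) = (?W *\<^sub>v v) $ i" by (rule mulv_entry[symmetric, OF W v i])
    also have "\<dots> = \<mu> * v $ i" using Wv i v by simp
    finally show ?thesis .
  qed
  have low: "v $ i = \<mu> * v $ (n + i)" if i: "i < n" for i
  proof -
    have "\<mu> * v $ (n + i) = (\<Sum>j<n+n. ?W $$ (n + i,j) * v $ j)" using row[of "n+i"] i by simp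
    also have "\<dots> = (\<Sum>j<n. ?W $$ (n + i,j) * v $ j) + (\<Sum>j<n. ?W $$ (n+i, n + j) * v $ (n + j))"
      by (rule sum_split_add)
    also have "(\<Sum>j<n. ?W $$ (n+i, n + j) * v $ (n + j)) = 0"
      using Wm_entries(4)[OF T U i] by simp
    also have "(\<Sum>j<n. ?W $$ (n + i,j) * v $ j) = (\<Sum>j<n. (if j = i then v $ j else 0))"
      by (rule sum.cong, insert Wm_entries(3)[OF T U i], auto)
    also have "\<dots> = v $ i" using i by (simp add: sum.delta)
    finally show ?thesis by simp
  qed
  have top: "\<mu> * (\<Sum>j<n. complex_of_real (T $$ (i,j)) * v $ (n+j)) + (\<Sum>j<n. complex_of_real (U $$ (i,j)) * v $ (n+j))
      = \<mu> * \<mu> * v $ (n + i)" if i: "i < n" for i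
  proof -
    have "\<mu> * \<mu> * v $ (n + i) = \<mu> * v $ i" using low[OF i] by simp
    also have "\<dots> = (\<Sum>j<n+n. ?W $$ (i,j) * v $ j)" using row[of i] i by simp
    also have "\<dots> = (\<Sum>j<n. ?W $$ (i,j) * v $ j) + (\<Sum>j<n. ?W $$ (i, n + j) * v $ (n + j))"
      by (rule sum_split_add)
    also have "(\<Sum>j<n. ?W $$ (i,j) * v $ j) = (\<Sum>j<n. \<mu> * (complex_of_real (T $$ (i,j)) * v $ (n+j)))"
      by (rule sum.cong, insert Wm_entries(1)[OF T U i] low, auto)
    also have "\<dots> = \<mu> * (\<Sum>j<n. complex_of_real (T $$ (i,j)) * v $ (n+j))" by (simp add: sum_distrib_left)
    also have "(\<Sum>j<n. ?W $$ (i, n + j) * v $ (n + j)) = (\<Sum>j<n. complex_of_real (U $$ (i,j)) * v $ (n+j))"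
      by (rule sum.cong, insert Wm_entries(2)[OF T U i], auto)
    finally show ?thesis by simp
  qed
  define u where "u j = cmod (v $ (n + j))" for j
  show ?thesis
  proof (intro exI[of _ u] conjI allI impI)
    fix i assume i: "i < n"
    show "u i \<ge> 0" unfolding u_def by simp
    have "cmod \<mu> ^ 2 * u i = cmod (\<mu> * \<mu> * v $ (n + i))"
      unfolding u_def by (simp add: norm_mult power2_eq_square)
    also have "\<dots> = cmod (\<mu> * (\<Sum>j<n. complex_of_real (T $$ (i,j)) * v $ (n+j)) + (\<Sum>j<n. complex_of_real (U $$ (i,j)) * v $ (n+j)))"
      using top[OF i] by simp
    also have "\<dots> \<le> cmod (\<mu> * (\<Sum>j<n. complex_of_real (T $$ (i,j)) * v $ (n+j))) + cmod (\<Sum>j<n. complex_of_real (U $$ (i,j)) * v $ (n+j))"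
      by (rule norm_triangle_ineq)
    also have "\<dots> \<le> cmod \<mu> * (\<Sum>j<n. T $$ (i,j) * u j) + (\<Sum>j<n. U $$ (i,j) * u j)"
    proof (rule add_mono)
      have "cmod (\<Sum>j<n. complex_of_real (T $$ (i,j)) * v $ (n+j)) \<le> (\<Sum>j<n. cmod (complex_of_real (T $$ (i,j)) * v $ (n+j)))"
        by (rule norm_sum)
      also have "\<dots> = (\<Sum>j<n. T $$ (i,j) * u j)"
        by (rule sum.cong, insert Tn[OF i], auto simp: u_def norm_mult)
      finally show "cmod (\<mu> * (\<Sum>j<n. complex_of_real (T $$ (i,j)) * v $ (n+j))) \<le> cmod \<mu> * (\<Sum>j<n. T $$ (i,j) * u j)"
        by (simp add: norm_mult mult_left_mono)
      have "cmod (\<Sum>j<n. complex_of_real (U $$ (i,j)) * v $ (n+j)) \<le> (\<Sum>j<n. cmod (complex_of_real (U $$ (i,j)) * v $ (n+j)))"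
        by (rule norm_sum)
      also have "\<dots> = (\<Sum>j<n. U $$ (i,j) * u j)"
        by (rule sum.cong, insert Un[OF i], auto simp: u_def norm_mult)
      finally show "cmod (\<Sum>j<n. complex_of_real (U $$ (i,j)) * v $ (n+j)) \<le> (\<Sum>j<n. U $$ (i,j) * u j)" .
    qed
    finally show "cmod \<mu> ^ 2 * u i \<le> cmod \<mu> * (\<Sum>j<n. T $$ (i,j) * u j) + (\<Sum>j<n. U $$ (i,j) * u j)" .
  next
    show "\<exists>i<n. u i > 0"
    proof (rule ccontr)
      assume "\<not> (\<exists>i<n. u i > 0)"
      hence z: "v $ (n + i) = 0" if "i < n" for i using that unfolding u_def
        by (metis norm_le_zero_iff not_less)
      have "v = 0\<^sub>v (n+n)"
      proof (rule eq_vecI)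
        fix k assume "k < dim_vec (0\<^sub>v (n + n) :: complex vec)" hence k: "k < n + n" by simp
        show "v $ k = 0\<^sub>v (n + n) $ k"
        proof (cases "k < n")
          case True thus ?thesis using low[OF True] z[OF True] k by simp
        next
          case False
          then obtain i where "k = n + i" "i < n" using k by (metis add_less_imp_less_left le_Suc_ex not_less)
          thus ?thesis using z k by simp
        qed
      qed (insert v, simp)
      with vnz show False by simp
    qed
  qed
qed


lemma Wm_left:
  assumes T: "T \<in> carrier_mat n n" and U: "U \<in> carrier_mat n n"
    and Tn: "\<And>i j. i < n \<Longrightarrow> j < n \<Longrightarrow> T $$ (i,j) \<ge> 0"
    and Un: "\<And>i j. i < n \<Longrightarrow> j < n \<Longrightarrow> U $$ (i,j) \<ge> 0"
    and ev: "eigenvalue (Wm n T U) \<mu>"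
  shows "\<exists>x. (\<forall>i<n. x i \<ge> 0) \<and> (\<exists>i<n. x i > 0) \<and>
    (\<forall>i<n. cmod \<mu> ^ 2 * x i \<le> cmod \<mu> * (\<Sum>j<n. T $$ (j,i) * x j) + (\<Sum>j<n. U $$ (j,i) * x j))"
proof -
  let ?W = "Wm n T U"
  have W: "?W \<in> carrier_mat (n+n) (n+n)" by (rule Wm_carrier[OF T])
  have WT: "transpose_mat ?W \<in> carrier_mat (n+n) (n+n)" using W by simp
  have "eigenvalue (transpose_mat ?W) \<mu>"
    using ev eigenvalue_root_char_poly[OF W] eigenvalue_root_char_poly[OF WT] char_poly_transpose_mat[OF W]
    by simp
  then obtain w where w: "w \<in> carrier_vec (n+n)" and wnz: "w \<noteq> 0\<^sub>v (n+n)"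
    and Ww: "transpose_mat ?W *\<^sub>v w = \<mu> \<cdot>\<^sub>v w" unfolding eigenvalue_def eigenvector_def using WT by auto
  have col: "(\<Sum>j<n+n. ?W $$ (j,i) * w $ j) = \<mu> * w $ i" if i: "i < n + n" for i
  proof -
    have "(\<Sum>j<n+n. ?W $$ (j,i) * w $ j) = (\<Sum>j<n+n. transpose_mat ?W $$ (i,j) * w $ j)"
      by (rule sum.cong, insert W i, auto)
    also have "\<dots> = (transpose_mat ?W *\<^sub>v w) $ i" by (rule mulv_entry[symmetric, OF WT w i])
    also have "\<dots> = \<mu> * w $ i" using Ww i w by simp
    finally show ?thesis .
  qed
  have low: "(\<Sum>j<n. complex_of_real (U $$ (j,i)) * w $ j) = \<mu> * w $ (n + i)" if i: "i < n" for i
  proof -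
    have "\<mu> * w $ (n + i) = (\<Sum>j<n+n. ?W $$ (j, n + i) * w $ j)" using col[of "n+i"] i by simp
    also have "\<dots> = (\<Sum>j<n. ?W $$ (j, n + i) * w $ j) + (\<Sum>j<n. ?W $$ (n + j, n + i) * w $ (n + j))"
      by (rule sum_split_add)
    also have "(\<Sum>j<n. ?W $$ (n + j, n + i) * w $ (n + j)) = 0"
      by (rule sum.neutral, insert Wm_entries(4)[OF T U _ i], auto)
    also have "(\<Sum>j<n. ?W $$ (j, n + i) * w $ j) = (\<Sum>j<n. complex_of_real (U $$ (j,i)) * w $ j)"
      by (rule sum.cong, insert Wm_entries(2)[OF T U _ i], auto)
    finally show ?thesis by simp
  qed
  have upr: "(\<Sum>j<n. complex_of_real (T $$ (j,i)) * w $ j) + w $ (n + i) = \<mu> * w $ i" if i: "i < n" for i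
  proof -
    have "\<mu> * w $ i = (\<Sum>j<n+n. ?W $$ (j, i) * w $ j)" using col[of i] i by simp
    also have "\<dots> = (\<Sum>j<n. ?W $$ (j, i) * w $ j) + (\<Sum>j<n. ?W $$ (n + j, i) * w $ (n + j))"
      by (rule sum_split_add)
    also have "(\<Sum>j<n. ?W $$ (n + j, i) * w $ (n + j)) = (\<Sum>j<n. (if j = i then w $ (n + j) else 0))"
      by (rule sum.cong, insert Wm_entries(3)[OF T U _ i], auto)
    also have "\<dots> = w $ (n + i)" using i by (simp add: sum.delta)
    also have "(\<Sum>j<n. ?W $$ (j, i) * w $ j) = (\<Sum>j<n. complex_of_real (T $$ (j,i)) * w $ j)"
      by (rule sum.cong, insert Wm_entries(1)[OF T U _ i], auto)
    finally show ?thesis by simp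
  qed
  have top: "\<mu> * (\<Sum>j<n. complex_of_real (T $$ (j,i)) * w $ j) + (\<Sum>j<n. complex_of_real (U $$ (j,i)) * w $ j)
      = \<mu> * \<mu> * w $ i" if i: "i < n" for i
  proof -
    have "\<mu> * \<mu> * w $ i = \<mu> * ((\<Sum>j<n. complex_of_real (T $$ (j,i)) * w $ j) + w $ (n + i))"
      using upr[OF i] by simp
    also have "\<dots> = \<mu> * (\<Sum>j<n. complex_of_real (T $$ (j,i)) * w $ j) + \<mu> * w $ (n + i)"
      by (simp add: distrib_left)
    finally show ?thesis using low[OF i] by simp
  qed
  define x where "x j = cmod (w $ j)" for j
  show ?thesis
  proof (intro exI[of _ x] conjI allI impI)
    fix i assume i: "i < n"
    show "x i \<ge> 0" unfolding x_def by simp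
    have "cmod \<mu> ^ 2 * x i = cmod (\<mu> * \<mu> * w $ i)"
      unfolding x_def by (simp add: norm_mult power2_eq_square)
    also have "\<dots> = cmod (\<mu> * (\<Sum>j<n. complex_of_real (T $$ (j,i)) * w $ j) + (\<Sum>j<n. complex_of_real (U $$ (j,i)) * w $ j))"
      using top[OF i] by simp
    also have "\<dots> \<le> cmod (\<mu> * (\<Sum>j<n. complex_of_real (T $$ (j,i)) * w $ j)) + cmod (\<Sum>j<n. complex_of_real (U $$ (j,i)) * w $ j)"
      by (rule norm_triangle_ineq)
    also have "\<dots> \<le> cmod \<mu> * (\<Sum>j<n. T $$ (j,i) * x j) + (\<Sum>j<n. U $$ (j,i) * x j)"
    proof (rule add_mono)
      have "cmod (\<Sum>j<n. complex_of_real (T $$ (j,i)) * w $ j) \<le> (\<Sum>j<n. cmod (complex_of_real (T $$ (j,i)) * w $ j))"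
        by (rule norm_sum)
      also have "\<dots> = (\<Sum>j<n. T $$ (j,i) * x j)"
        by (rule sum.cong, insert Tn i, auto simp: x_def norm_mult)
      finally show "cmod (\<mu> * (\<Sum>j<n. complex_of_real (T $$ (j,i)) * w $ j)) \<le> cmod \<mu> * (\<Sum>j<n. T $$ (j,i) * x j)"
        by (simp add: norm_mult mult_left_mono)
      have "cmod (\<Sum>j<n. complex_of_real (U $$ (j,i)) * w $ j) \<le> (\<Sum>j<n. cmod (complex_of_real (U $$ (j,i)) * w $ j))"
        by (rule norm_sum)
      also have "\<dots> = (\<Sum>j<n. U $$ (j,i) * x j)"
        by (rule sum.cong, insert Un i, auto simp: x_def norm_mult)
      finally show "cmod (\<Sum>j<n. complex_of_real (U $$ (j,i)) * w $ j) \<le> (\<Sum>j<n. U $$ (j,i) * x j)" .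
    qed
    finally show "cmod \<mu> ^ 2 * x i \<le> cmod \<mu> * (\<Sum>j<n. T $$ (j,i) * x j) + (\<Sum>j<n. U $$ (j,i) * x j)" .
  next
    show "\<exists>i<n. x i > 0"
    proof (rule ccontr)
      assume "\<not> (\<exists>i<n. x i > 0)"
      hence z: "w $ i = 0" if "i < n" for i using that unfolding x_def
        by (metis norm_le_zero_iff not_less)
      have "w = 0\<^sub>v (n+n)"
      proof (rule eq_vecI)
        fix k assume "k < dim_vec (0\<^sub>v (n + n) :: complex vec)" hence k: "k < n + n" by simp
        show "w $ k = 0\<^sub>v (n + n) $ k"
        proof (cases "k < n")
          case True thus ?thesis using z[OF True] k by simp
        next
          case False
          then obtain i where ki: "k = n + i" and i: "i < n" using k by (metis add_less_imp_less_left le_Suc_ex not_less)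
          have "w $ (n + i) = \<mu> * w $ i - (\<Sum>j<n. complex_of_real (T $$ (j,i)) * w $ j)"
            using upr[OF i] by (simp add: algebra_simps)
          also have "\<dots> = 0" using z i by simp
          finally show ?thesis using ki k by simp
        qed
      qed (insert w, simp)
      with wnz show False by simp
    qed
  qed
qed


lemma nonneg_pow:
  fixes N :: "real mat"
  assumes N: "N \<in> carrier_mat k k" and Nn: "\<And>i j. i < k \<Longrightarrow> j < k \<Longrightarrow> N $$ (i,j) \<ge> 0"
  shows "i < k \<Longrightarrow> j < k \<Longrightarrow> (N ^\<^sub>m t) $$ (i,j) \<ge> 0"
proof (induction t arbitrary: i j)
  case 0 thus ?case using N by auto
next
  case (Suc t)
  have P: "N ^\<^sub>m t \<in> carrier_mat k k" using N by simp
  have "(N ^\<^sub>m Suc t) $$ (i,j) = (\<Sum>l<k. (N ^\<^sub>m t) $$ (i,l) * N $$ (l,j))"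
    using mult_entry[OF P N Suc.prems] by simp
  also have "\<dots> \<ge> 0" by (rule sum_nonneg, insert Suc Nn, auto)
  finally show ?case .
qed

lemma sr_nonneg:
  assumes "A \<in> carrier_mat k k" "k > 0"
  shows "spectral_radius A \<ge> 0"
  using spectral_radius_mem_max(1)[OF assms] by auto

lemma sr_lower:
  fixes N :: "real mat" and z :: "nat \<Rightarrow> real"
  assumes N: "N \<in> carrier_mat k k" and Nn: "\<And>i j. i < k \<Longrightarrow> j < k \<Longrightarrow> N $$ (i,j) \<ge> 0"
    and zn: "\<And>i. i < k \<Longrightarrow> z i \<ge> 0" and i0: "i0 < k" and zi0: "z i0 > 0" and \<beta>: "\<beta> > 0"
    and Nz: "\<And>i. i < k \<Longrightarrow> \<beta> * z i \<le> (\<Sum>j<k. N $$ (i,j) * z j)"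
  shows "\<beta> \<le> spectral_radius (map_mat complex_of_real N)"
proof (rule ccontr)
  define Nc where "Nc = map_mat complex_of_real N"
  define \<rho> where "\<rho> = spectral_radius Nc"
  assume "\<not> \<beta> \<le> spectral_radius (map_mat complex_of_real N)"
  hence lt: "\<rho> < \<beta>" unfolding \<rho>_def Nc_def by simp
  have \<rho>0: "\<rho> \<ge> 0" unfolding \<rho>_def Nc_def by (rule sr_nonneg[of _ k], insert N i0, auto)
  define \<gamma> where "\<gamma> = (\<rho> + \<beta>) / 2"
  have \<gamma>: "\<gamma> > 0" "\<rho> < \<gamma>" "\<gamma> < \<beta>" using lt \<rho>0 unfolding \<gamma>_def by auto
  have k0: "k > 0" using i0 by simp
  have Ncc: "Nc \<in> carrier_mat k k" unfolding Nc_def using N by simp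
  define N' where "N' = (1 / \<gamma>) \<cdot>\<^sub>m N"
  have N'c: "N' \<in> carrier_mat k k" unfolding N'_def using N by simp
  define Nc' where "Nc' = map_mat complex_of_real N'"
  have Nc'c: "Nc' \<in> carrier_mat k k" unfolding Nc'_def using N'c by simp
  have sr1: "spectral_radius Nc' < 1"
  proof -
    from spectral_radius_mem_max(1)[OF Nc'c k0] obtain lam where
      lam: "lam \<in> spectrum Nc'" and eq: "spectral_radius Nc' = norm lam" by auto
    from lam obtain v where v: "v \<in> carrier_vec k" and vnz: "v \<noteq> 0\<^sub>v k" and Nv: "Nc' *\<^sub>v v = lam \<cdot>\<^sub>v v"
      unfolding spectrum_def eigenvalue_def eigenvector_def using Nc'c by auto
    have "Nc *\<^sub>v v = (complex_of_real \<gamma> * lam) \<cdot>\<^sub>v v"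
    proof (rule eq_vecI)
      fix i assume "i < dim_vec ((complex_of_real \<gamma> * lam) \<cdot>\<^sub>v v)"
      hence i: "i < k" using v by simp
      have "(Nc *\<^sub>v v) $ i = (\<Sum>j<k. Nc $$ (i,j) * v $ j)" by (rule mulv_entry[OF Ncc v i])
      also have "\<dots> = complex_of_real \<gamma> * (\<Sum>j<k. Nc' $$ (i,j) * v $ j)"
        unfolding sum_distrib_left
        by (rule sum.cong, insert i \<gamma> N, auto simp: Nc_def Nc'_def N'_def)
      also have "(\<Sum>j<k. Nc' $$ (i,j) * v $ j) = (Nc' *\<^sub>v v) $ i" by (rule mulv_entry[symmetric, OF Nc'c v i])
      also have "\<dots> = lam * v $ i" using Nv i v by simp
      finally show "(Nc *\<^sub>v v) $ i = ((complex_of_real \<gamma> * lam) \<cdot>\<^sub>v v) $ i" using i v by simp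
    qed (insert v Ncc, simp)
    hence "complex_of_real \<gamma> * lam \<in> spectrum Nc"
      unfolding spectrum_def eigenvalue_def eigenvector_def using v vnz Ncc by auto
    hence "norm (complex_of_real \<gamma> * lam) \<le> \<rho>"
      unfolding \<rho>_def by (intro spectral_radius_mem_max(2)[OF Ncc k0], auto)
    hence "\<gamma> * norm lam \<le> \<rho>" using \<gamma> by (simp add: norm_mult)
    hence "\<gamma> * norm lam < \<gamma>" using \<gamma> by linarith
    hence "norm lam < 1" using \<gamma> by simp
    thus ?thesis using eq by simp
  qed
  from spectral_radius_jnf_norm_bound_less_1_upper_triangular[OF Nc'c sr1]
  obtain c0 where c0: "\<And>t. norm_bound (Nc' ^\<^sub>m t) c0" by blast
  have bnd: "\<bar>(N' ^\<^sub>m t) $$ (i,j)\<bar> \<le> c0" if "i < k" "j < k" for t i j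
  proof -
    have "Nc' ^\<^sub>m t = map_mat complex_of_real (N' ^\<^sub>m t)"
      unfolding Nc'_def by (rule of_real_hom.mat_hom_pow[OF N'c, symmetric])
    hence e: "(Nc' ^\<^sub>m t) $$ (i,j) = complex_of_real ((N' ^\<^sub>m t) $$ (i,j))" using that N'c by simp
    have "norm ((Nc' ^\<^sub>m t) $$ (i,j)) \<le> c0" using c0[of t] that Nc'c unfolding norm_bound_def by simp
    hence "norm (complex_of_real ((N' ^\<^sub>m t) $$ (i,j))) \<le> c0" using e by simp
    thus ?thesis by simp
  qed
  define \<kappa> where "\<kappa> = \<beta> / \<gamma>"
  have \<kappa>: "\<kappa> > 1" unfolding \<kappa>_def using \<gamma> by simp
  have N'n: "N' $$ (i,j) \<ge> 0" if "i < k" "j < k" for i j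
    unfolding N'_def using Nn[OF that] \<gamma> that N by simp
  define zv where "zv = vec k z"
  have zv: "zv \<in> carrier_vec k" unfolding zv_def by simp
  have N'z: "\<kappa> * z i \<le> (N' *\<^sub>v zv) $ i" if i: "i < k" for i
  proof -
    have "(N' *\<^sub>v zv) $ i = (\<Sum>j<k. N' $$ (i,j) * zv $ j)" by (rule mulv_entry[OF N'c zv i])
    also have "\<dots> = (1 / \<gamma>) * (\<Sum>j<k. N $$ (i,j) * z j)"
      unfolding sum_distrib_left by (rule sum.cong, insert i N, auto simp: N'_def zv_def)
    finally have e: "(N' *\<^sub>v zv) $ i = (1 / \<gamma>) * (\<Sum>j<k. N $$ (i,j) * z j)" .
    have "\<kappa> * z i = (1 / \<gamma>) * (\<beta> * z i)" unfolding \<kappa>_def by simp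
    also have "\<dots> \<le> (1 / \<gamma>) * (\<Sum>j<k. N $$ (i,j) * z j)"
      by (rule mult_left_mono[OF Nz[OF i]], insert \<gamma>, simp)
    finally show ?thesis using e by simp
  qed
  have grow: "\<kappa> ^ t * z i \<le> (N' ^\<^sub>m t *\<^sub>v zv) $ i" if "i < k" for t i
    using that
  proof (induction t arbitrary: i)
    case 0 thus ?case using N'c zv by (simp add: zv_def)
  next
    case (Suc t)
    have P: "N' ^\<^sub>m t \<in> carrier_mat k k" using N'c by simp
    have Nzc: "N' *\<^sub>v zv \<in> carrier_vec k" using N'c zv by simp
    have "(N' ^\<^sub>m Suc t *\<^sub>v zv) $ i = (N' ^\<^sub>m t *\<^sub>v (N' *\<^sub>v zv)) $ i"
      using assoc_mult_mat_vec[OF P N'c zv] by simp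
    also have "\<dots> = (\<Sum>j<k. (N' ^\<^sub>m t) $$ (i,j) * (N' *\<^sub>v zv) $ j)" by (rule mulv_entry[OF P Nzc Suc.prems])
    also have "\<dots> \<ge> (\<Sum>j<k. (N' ^\<^sub>m t) $$ (i,j) * (\<kappa> * zv $ j))"
      by (rule sum_mono, rule mult_left_mono, insert N'z nonneg_pow[OF N'c N'n] Suc.prems, auto simp: zv_def)
    also have "(\<Sum>j<k. (N' ^\<^sub>m t) $$ (i,j) * (\<kappa> * zv $ j)) = \<kappa> * (N' ^\<^sub>m t *\<^sub>v zv) $ i"
      unfolding mulv_entry[OF P zv Suc.prems] sum_distrib_left by (rule sum.cong, auto)
    finally have a: "\<kappa> * (N' ^\<^sub>m t *\<^sub>v zv) $ i \<le> (N' ^\<^sub>m Suc t *\<^sub>v zv) $ i" .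
    have b: "\<kappa> * (\<kappa> ^ t * z i) \<le> \<kappa> * (N' ^\<^sub>m t *\<^sub>v zv) $ i"
      by (rule mult_left_mono[OF Suc.IH[OF Suc.prems]], insert \<kappa>, simp)
    show ?case using a b by (simp add: mult.assoc)
  qed
  define Z where "Z = (\<Sum>j<k. z j)"
  have ub: "(N' ^\<^sub>m t *\<^sub>v zv) $ i0 \<le> c0 * Z" for t
  proof -
    have P: "N' ^\<^sub>m t \<in> carrier_mat k k" using N'c by simp
    have "(N' ^\<^sub>m t *\<^sub>v zv) $ i0 = (\<Sum>j<k. (N' ^\<^sub>m t) $$ (i0,j) * zv $ j)" by (rule mulv_entry[OF P zv i0])
    also have "\<dots> \<le> (\<Sum>j<k. c0 * z j)"
    proof (rule sum_mono)
      fix j assume "j \<in> {..<k}" hence j: "j < k" by simp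
      have "(N' ^\<^sub>m t) $$ (i0,j) \<le> c0" using bnd[OF i0 j, of t] by simp
      thus "(N' ^\<^sub>m t) $$ (i0,j) * zv $ j \<le> c0 * z j"
        using zn[OF j] j by (simp add: zv_def mult_right_mono)
    qed
    finally show ?thesis unfolding Z_def sum_distrib_left .
  qed
  from real_arch_pow[OF \<kappa>, of "c0 * Z / z i0"] obtain t where t: "c0 * Z / z i0 < \<kappa> ^ t" by blast
  have "\<kappa> ^ t * z i0 \<le> c0 * Z" using grow[OF i0, of t] ub[of t] by simp
  hence "\<kappa> ^ t \<le> c0 * Z / z i0" using zi0 by (simp add: field_simps)
  with t show False by simp
qed



lemma tmulv_entry:
  fixes B :: "real mat"
  assumes "B \<in> carrier_mat m n" "x \<in> carrier_vec m" "i < n"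
  shows "(transpose_mat B *\<^sub>v x) $ i = (\<Sum>j<m. B $$ (j, i) * x $ j)"
proof -
  have "(transpose_mat B *\<^sub>v x) $ i = (\<Sum>j<m. transpose_mat B $$ (i, j) * x $ j)"
    by (rule mulv_entry, insert assms, auto)
  also have "\<dots> = (\<Sum>j<m. B $$ (j, i) * x $ j)" by (rule sum.cong, insert assms, auto)
  finally show ?thesis .
qed

lemma iter_Wm:
  assumes "mp_inv P * R \<in> carrier_mat n n"
  shows "real_spectral_radius (iter_mat n P R S) = spectral_radius (Wm n (mp_inv P * R) (- (mp_inv P * S)))"
  unfolding real_spectral_radius_def iter_mat_def Wm_def by simp

lemma wr_facts:
  assumes A: "A \<in> carrier_mat m n" and wr: "weak_regular_pds A P R S"
  shows "P \<in> carrier_mat m n" "R \<in> carrier_mat m n" "S \<in> carrier_mat m n" "A = P - R + S"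
    "range_mat A = range_mat P" "null_mat A = null_mat P"
    "mp_inv P \<in> carrier_mat n m"
    "mp_inv P * R \<in> carrier_mat n n" "- (mp_inv P * S) \<in> carrier_mat n n"
    "\<And>i j. i < n \<Longrightarrow> j < m \<Longrightarrow> mp_inv P $$ (i,j) \<ge> 0"
    "\<And>i j. i < n \<Longrightarrow> j < n \<Longrightarrow> (mp_inv P * R) $$ (i,j) \<ge> 0"
    "\<And>i j. i < n \<Longrightarrow> j < n \<Longrightarrow> (- (mp_inv P * S)) $$ (i,j) \<ge> 0"
proof -
  note d = wr[unfolded weak_regular_pds_def proper_double_splitting_def]
  show P: "P \<in> carrier_mat m n" "R \<in> carrier_mat m n" "S \<in> carrier_mat m n" "A = P - R + S"
    "range_mat A = range_mat P" "null_mat A = null_mat P" using d A by auto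
  show G: "mp_inv P \<in> carrier_mat n m" by (rule mp_basic(1)[OF P(1)])
  show "mp_inv P * R \<in> carrier_mat n n" "- (mp_inv P * S) \<in> carrier_mat n n" using G P by auto
  show "\<And>i j. i < n \<Longrightarrow> j < m \<Longrightarrow> mp_inv P $$ (i,j) \<ge> 0"
    using d G unfolding nonneg_mat_def by auto
  show "\<And>i j. i < n \<Longrightarrow> j < n \<Longrightarrow> (mp_inv P * R) $$ (i,j) \<ge> 0"
    using d G P unfolding nonneg_mat_def by auto
  show "\<And>i j. i < n \<Longrightarrow> j < n \<Longrightarrow> (- (mp_inv P * S)) $$ (i,j) \<ge> 0"
    using d G P unfolding nonneg_mat_def by (metis carrier_matD index_mult_mat(2,3) index_uminus_mat(2,3))
qed

lemma GA_entry:
  assumes A: "A \<in> carrier_mat m n" and wr: "weak_regular_pds A P R S" and j: "j < n" and l: "l < n"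
  shows "(mp_inv P * A) $$ (j,l) = (mp_inv A * A) $$ (j,l) - (mp_inv P * R) $$ (j,l) - (- (mp_inv P * S)) $$ (j,l)"
proof -
  note f = wr_facts[OF A wr]
  have E: "mp_inv P * P = mp_inv A * A" by (rule mp_null_proj[OF A f(1) f(6)])
  have "(mp_inv P * A) $$ (j,l) = (\<Sum>k<m. mp_inv P $$ (j,k) * A $$ (k,l))" by (rule mult_entry[OF f(7) A j l])
  also have "\<dots> = (\<Sum>k<m. mp_inv P $$ (j,k) * P $$ (k,l)) - (\<Sum>k<m. mp_inv P $$ (j,k) * R $$ (k,l))
      + (\<Sum>k<m. mp_inv P $$ (j,k) * S $$ (k,l))"
    unfolding sum_subtractf[symmetric] sum.distrib[symmetric]
    by (rule sum.cong, insert f(1-4) l, auto simp: algebra_simps)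
  also have "\<dots> = (mp_inv P * P) $$ (j,l) - (mp_inv P * R) $$ (j,l) + (mp_inv P * S) $$ (j,l)"
    using mult_entry[OF f(7) f(1) j l] mult_entry[OF f(7) f(2) j l] mult_entry[OF f(7) f(3) j l] by simp
  finally show ?thesis using E f(7) f(3) j l by simp
qed

lemma conv:
  assumes A: "A \<in> carrier_mat m n" and n1: "n \<ge> 1" and Hn: "nonneg_mat (mp_inv A)"
    and wr: "weak_regular_pds A P R S"
  shows "real_spectral_radius (iter_mat n P R S) < 1"
proof -
  note f = wr_facts[OF A wr]
  define G where "G = mp_inv P"
  define H where "H = mp_inv A"
  define T where "T = G * R"
  define U where "U = - (G * S)"
  have G: "G \<in> carrier_mat n m" and T: "T \<in> carrier_mat n n" and U: "U \<in> carrier_mat n n"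
    using f unfolding G_def T_def U_def by auto
  have H: "H \<in> carrier_mat n m" unfolding H_def by (rule mp_basic(1)[OF A])
  have Hnn: "H $$ (i,j) \<ge> 0" if "i < n" "j < m" for i j using Hn H that unfolding nonneg_mat_def H_def by auto
  have Gn: "G $$ (i,j) \<ge> 0" if "i < n" "j < m" for i j using f(10) that unfolding G_def by auto
  have Tn: "T $$ (i,j) \<ge> 0" if "i < n" "j < n" for i j using f(11) that unfolding T_def G_def by auto
  have Un: "U $$ (i,j) \<ge> 0" if "i < n" "j < n" for i j using f(12) that unfolding U_def G_def by auto
  have eqsr: "real_spectral_radius (iter_mat n P R S) = spectral_radius (Wm n T U)"
    unfolding T_def U_def G_def by (rule iter_Wm[OF f(8)])
  have W: "Wm n T U \<in> carrier_mat (n+n) (n+n)" by (rule Wm_carrier[OF T])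
  have nn: "n + n > 0" using n1 by simp
  from spectral_radius_mem_max(1)[OF W nn] obtain \<mu> where
    \<mu>: "\<mu> \<in> spectrum (Wm n T U)" and eq: "spectral_radius (Wm n T U) = cmod \<mu>" by auto
  show ?thesis
  proof (rule ccontr)
    assume "\<not> ?thesis"
    hence \<rho>1: "cmod \<mu> \<ge> 1" using eqsr eq by simp
    define \<rho> where "\<rho> = cmod \<mu>"
    from Wm_left[OF T U Tn Un, of \<mu>] \<mu> obtain x where xn: "\<And>i. i < n \<Longrightarrow> x i \<ge> 0"
      and xp: "\<exists>i<n. x i > 0"
      and xi: "\<And>i. i < n \<Longrightarrow> \<rho> ^ 2 * x i \<le> \<rho> * (\<Sum>j<n. T $$ (j,i) * x j) + (\<Sum>j<n. U $$ (j,i) * x j)"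
      unfolding spectrum_def \<rho>_def by auto
    have xM: "x i \<le> (\<Sum>j<n. (T $$ (j,i) + U $$ (j,i)) * x j)" if i: "i < n" for i
    proof -
      have sU: "(\<Sum>j<n. U $$ (j,i) * x j) \<ge> 0" by (rule sum_nonneg, insert Un xn i, auto)
      have "(\<Sum>j<n. U $$ (j,i) * x j) \<le> \<rho> * (\<Sum>j<n. U $$ (j,i) * x j)"
        using mult_right_mono[OF \<rho>1 sU] unfolding \<rho>_def by simp
      hence "\<rho> * (\<rho> * x i) \<le> \<rho> * ((\<Sum>j<n. T $$ (j,i) * x j) + (\<Sum>j<n. U $$ (j,i) * x j))"
        using xi[OF i] by (simp add: power2_eq_square algebra_simps)
      hence 1: "\<rho> * x i \<le> (\<Sum>j<n. T $$ (j,i) * x j) + (\<Sum>j<n. U $$ (j,i) * x j)"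
        by (rule mult_left_le_imp_le, insert \<rho>1, auto simp: \<rho>_def)
      have "x i \<le> \<rho> * x i" using mult_right_mono[OF \<rho>1 xn[OF i]] unfolding \<rho>_def by simp
      with 1 show ?thesis by (simp add: sum.distrib algebra_simps)
    qed
    define xv where "xv = vec n x"
    have xv: "xv \<in> carrier_vec n" unfolding xv_def by simp
    define y where "y = transpose_mat G *\<^sub>v xv"
    have y: "y \<in> carrier_vec m" unfolding y_def using G xv by simp
    have yent: "y $ k = (\<Sum>j<n. G $$ (j,k) * x j)" if "k < m" for k
      unfolding y_def using tmulv_entry[OF G xv that] by (simp add: xv_def)
    have yn: "y $ k \<ge> 0" if "k < m" for k
      unfolding yent[OF that] by (rule sum_nonneg, insert Gn xn that, auto)
    have GT: "transpose_mat G \<in> carrier_mat m n" using G by simp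
    have HT: "transpose_mat H \<in> carrier_mat m n" using H by simp
    have AT: "transpose_mat A \<in> carrier_mat n m" using A by simp
    have GA: "G * A \<in> carrier_mat n n" using G A by simp
    have HA: "H * A \<in> carrier_mat n n" using H A by simp
    define a where "a = transpose_mat A *\<^sub>v y"
    have a: "a \<in> carrier_vec n" unfolding a_def using AT y by simp
    have a_eq: "a = transpose_mat (G * A) *\<^sub>v xv"
      unfolding a_def y_def transpose_mult[OF G A] using assoc_mult_mat_vec[OF AT GT xv] by simp
    define b where "b = transpose_mat (H * A) *\<^sub>v xv - xv"
    have b: "b \<in> carrier_vec n" unfolding b_def using HA xv by simp
    have ab: "a $ l \<le> b $ l" if l: "l < n" for l
    proof -
      have "a $ l = (\<Sum>j<n. (G * A) $$ (j,l) * x j)"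
        unfolding a_eq using tmulv_entry[OF GA xv l] by (simp add: xv_def)
      also have "\<dots> = (\<Sum>j<n. (H * A) $$ (j,l) * x j) - (\<Sum>j<n. (T $$ (j,l) + U $$ (j,l)) * x j)"
        unfolding sum_subtractf[symmetric]
      proof (rule sum.cong[OF refl])
        fix j assume "j \<in> {..<n}" hence j: "j < n" by simp
        have e: "(G * A) $$ (j,l) = (H * A) $$ (j,l) - (T $$ (j,l) + U $$ (j,l))"
          using GA_entry[OF A wr j l] unfolding G_def H_def T_def U_def by simp
        show "(G * A) $$ (j, l) * x j = (H * A) $$ (j, l) * x j - (T $$ (j, l) + U $$ (j, l)) * x j"
          unfolding e by (simp add: left_diff_distrib)
      qed
      also have "\<dots> \<le> (\<Sum>j<n. (H * A) $$ (j,l) * x j) - x l" using xM[OF l] by simp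
      also have "\<dots> = b $ l" unfolding b_def using tmulv_entry[OF HA xv l] l xv HA by (simp add: xv_def)
      finally show ?thesis .
    qed
    have Ha: "transpose_mat H *\<^sub>v a = y"
    proof -
      have "transpose_mat H *\<^sub>v a = (transpose_mat H * transpose_mat A) *\<^sub>v y"
        unfolding a_def by (rule assoc_mult_mat_vec[OF HT AT y, symmetric])
      also have "transpose_mat H * transpose_mat A = transpose_mat (A * H)" by (rule transpose_mult[OF A H, symmetric])
      also have "A * H = P * G" unfolding H_def G_def by (rule mp_range_proj[OF A f(1) f(5), symmetric])
      also have "transpose_mat (P * G) *\<^sub>v y = (transpose_mat G * transpose_mat P) *\<^sub>v (transpose_mat G *\<^sub>v xv)"
        unfolding y_def transpose_mult[OF f(1) G] ..
      also have "\<dots> = (transpose_mat G * transpose_mat P * transpose_mat G) *\<^sub>v xv"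
        by (rule assoc_mult_mat_vec[symmetric], insert G f(1) xv, auto)
      also have "transpose_mat G * transpose_mat P * transpose_mat G = transpose_mat (G * P * G)"
      proof -
        have GP: "G * P \<in> carrier_mat n n" using G f(1) by simp
        have PT: "transpose_mat P \<in> carrier_mat n m" using f(1) by simp
        have "transpose_mat (G * P * G) = transpose_mat G * transpose_mat (G * P)" by (rule transpose_mult[OF GP G])
        also have "transpose_mat (G * P) = transpose_mat P * transpose_mat G" by (rule transpose_mult[OF G f(1)])
        finally show ?thesis using assoc_mult_mat[OF GT PT GT] by simp
      qed
      also have "G * P * G = G" unfolding G_def by (rule mp_basic(3)[OF f(1)])
      finally show ?thesis unfolding y_def .
    qed
    have Hb: "transpose_mat H *\<^sub>v b = 0\<^sub>v m"
    proof -
      have HAx: "transpose_mat (H * A) *\<^sub>v xv \<in> carrier_vec n" using HA xv by simp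
      have "transpose_mat H *\<^sub>v b = transpose_mat H *\<^sub>v (transpose_mat (H * A) *\<^sub>v xv) - transpose_mat H *\<^sub>v xv"
        unfolding b_def by (rule mult_minus_distrib_mat_vec[OF HT HAx xv])
      also have "transpose_mat H *\<^sub>v (transpose_mat (H * A) *\<^sub>v xv) = transpose_mat (H * A * H) *\<^sub>v xv"
        using assoc_mult_mat_vec[OF HT _ xv, of "transpose_mat (H * A)"] transpose_mult[OF HA H] HA by simp
      also have "H * A * H = H" unfolding H_def by (rule mp_basic(3)[OF A])
      finally show ?thesis using HT xv by simp
    qed
    have y0: "y $ k = 0" if k: "k < m" for k
    proof -
      have "y $ k = (transpose_mat H *\<^sub>v a) $ k" using Ha by simp
      also have "\<dots> = (\<Sum>l<n. H $$ (l,k) * a $ l)" by (rule tmulv_entry[OF H a k])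
      also have "\<dots> \<le> (\<Sum>l<n. H $$ (l,k) * b $ l)"
        by (rule sum_mono, rule mult_left_mono, insert ab Hnn k, auto)
      also have "\<dots> = (transpose_mat H *\<^sub>v b) $ k" by (rule tmulv_entry[symmetric, OF H b k])
      also have "\<dots> = 0" using Hb k by simp
      finally show ?thesis using yn[OF k] by simp
    qed
    have "x i \<le> 0" if i: "i < n" for i
    proof -
      have "(\<Sum>j<n. (T $$ (j,i) + U $$ (j,i)) * x j) = (\<Sum>j<n. (G * R - G * S) $$ (j,i) * x j)"
        by (rule sum.cong, insert G f(2,3) i, auto simp: T_def U_def)
      also have "G * R - G * S = G * (R - S)"
        by (rule mult_minus_distrib_mat[symmetric], insert G f(2,3), auto)
      also have "(\<Sum>j<n. (G * (R - S)) $$ (j,i) * x j) = (\<Sum>j<n. (\<Sum>k<m. G $$ (j,k) * (R - S) $$ (k,i)) * x j)"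
      proof (rule sum.cong[OF refl])
        fix j assume "j \<in> {..<n}" hence j: "j < n" by simp
        have RS: "R - S \<in> carrier_mat m n" using f(2,3) by (metis minus_carrier_mat)
        show "(G * (R - S)) $$ (j,i) * x j = (\<Sum>k<m. G $$ (j,k) * (R - S) $$ (k,i)) * x j"
          using mult_entry[OF G RS j i] by simp
      qed
      also have "\<dots> = (\<Sum>k<m. (R - S) $$ (k,i) * y $ k)"
        unfolding sum_distrib_right
        by (subst sum.swap, rule sum.cong, insert yent, auto simp: sum_distrib_left algebra_simps)
      also have "\<dots> = 0" using y0 by simp
      finally show ?thesis using xM[OF i] by simp
    qed
    with xp xn show False by force
  qed
qed



lemma fb_entries:
  fixes T U :: "real mat"
  assumes T: "T \<in> carrier_mat n n" and U: "U \<in> carrier_mat n n" and i: "i < n" and j: "j < n"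
  shows "four_block_mat T U (1\<^sub>m n) (0\<^sub>m n n) $$ (i, j) = T $$ (i,j)"
    "four_block_mat T U (1\<^sub>m n) (0\<^sub>m n n) $$ (i, n + j) = U $$ (i,j)"
    "four_block_mat T U (1\<^sub>m n) (0\<^sub>m n n) $$ (n + i, j) = (if i = j then 1 else 0)"
    "four_block_mat T U (1\<^sub>m n) (0\<^sub>m n n) $$ (n + i, n + j) = 0"
  using assms by auto

lemma minus_entry:
  fixes X Y :: "real mat"
  shows "Y \<in> carrier_mat a b \<Longrightarrow> i < a \<Longrightarrow> j < b \<Longrightarrow> (X - Y) $$ (i,j) = X $$ (i,j) - Y $$ (i,j)"
  by simp

theorem theorem3p8:
  fixes A P1 R1 S1 P2 R2 S2 :: "real mat" and m n :: nat
  assumes "n \<ge> 1"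
    and "A \<in> carrier_mat m n"
    and "nonneg_mat (mp_inv A)"
    and "weak_regular_pds A P1 R1 S1"
    and "weak_regular_pds A P2 R2 S2"
    and "ge_mat (mp_inv P1 * A) (mp_inv P2 * A)"
    and "ge_mat (mp_inv P1 * R1) (mp_inv P2 * R2) \<or> ge_mat (mp_inv P1 * S1) (mp_inv P2 * S2)"
  shows "real_spectral_radius (iter_mat n P1 R1 S1) \<le> real_spectral_radius (iter_mat n P2 R2 S2)
       \<and> real_spectral_radius (iter_mat n P2 R2 S2) < 1"
proof -
  note n1 = assms(1) and A = assms(2) and Hn = assms(3) and wr1 = assms(4) and wr2 = assms(5)
    and geA = assms(6) and ge12 = assms(7)
  note f1 = wr_facts[OF A wr1] and f2 = wr_facts[OF A wr2]
  have c1: "real_spectral_radius (iter_mat n P1 R1 S1) < 1" by (rule conv[OF A n1 Hn wr1])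
  have c2: "real_spectral_radius (iter_mat n P2 R2 S2) < 1" by (rule conv[OF A n1 Hn wr2])
  define T1 where "T1 = mp_inv P1 * R1"
  define U1 where "U1 = - (mp_inv P1 * S1)"
  define T2 where "T2 = mp_inv P2 * R2"
  define U2 where "U2 = - (mp_inv P2 * S2)"
  have T1: "T1 \<in> carrier_mat n n" and U1: "U1 \<in> carrier_mat n n"
    and T2: "T2 \<in> carrier_mat n n" and U2: "U2 \<in> carrier_mat n n"
    using f1 f2 unfolding T1_def U1_def T2_def U2_def by auto
  have T1n: "T1 $$ (i,j) \<ge> 0" if "i < n" "j < n" for i j using f1(11) that unfolding T1_def by auto
  have U1n: "U1 $$ (i,j) \<ge> 0" if "i < n" "j < n" for i j using f1(12) that unfolding U1_def by auto
  have T2n: "T2 $$ (i,j) \<ge> 0" if "i < n" "j < n" for i j using f2(11) that unfolding T2_def by auto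
  have U2n: "U2 $$ (i,j) \<ge> 0" if "i < n" "j < n" for i j using f2(12) that unfolding U2_def by auto
  define \<rho>1 where "\<rho>1 = real_spectral_radius (iter_mat n P1 R1 S1)"
  have \<rho>1W: "\<rho>1 = spectral_radius (Wm n T1 U1)"
    unfolding \<rho>1_def T1_def U1_def by (rule iter_Wm[OF f1(8)])
  have W1: "Wm n T1 U1 \<in> carrier_mat (n+n) (n+n)" by (rule Wm_carrier[OF T1])
  have nn: "n + n > 0" using n1 by simp
  from spectral_radius_mem_max(1)[OF W1 nn] obtain \<mu> where
    \<mu>: "\<mu> \<in> spectrum (Wm n T1 U1)" and eq: "\<rho>1 = cmod \<mu>" using \<rho>1W by auto
  have \<rho>1lt: "\<rho>1 < 1" using c1 unfolding \<rho>1_def .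
  have D: "T1 $$ (i,j) + U1 $$ (i,j) \<le> T2 $$ (i,j) + U2 $$ (i,j)" if i: "i < n" and j: "j < n" for i j
  proof -
    have GA1: "mp_inv P1 * A \<in> carrier_mat n n" using f1(7) A by simp
    have GA2: "mp_inv P2 * A \<in> carrier_mat n n" using f2(7) A by simp
    have nm: "nonneg_mat (mp_inv P1 * A - mp_inv P2 * A)" using geA unfolding ge_mat_def by blast
    have d1: "i < dim_row (mp_inv P1 * A - mp_inv P2 * A)" "j < dim_col (mp_inv P1 * A - mp_inv P2 * A)"
      using GA1 GA2 i j by auto
    have "(mp_inv P1 * A - mp_inv P2 * A) $$ (i,j) \<ge> 0"
      by (rule nm[unfolded nonneg_mat_def, rule_format, OF d1])
    hence "(mp_inv P1 * A) $$ (i,j) \<ge> (mp_inv P2 * A) $$ (i,j)" using minus_entry[OF GA2 i j, of "mp_inv P1 * A"] by linarith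
    thus ?thesis using GA_entry[OF A wr1 i j] GA_entry[OF A wr2 i j]
      unfolding T1_def T2_def U1_def U2_def by simp
  qed
  have key: "\<rho>1 * T1 $$ (i,j) + U1 $$ (i,j) \<le> \<rho>1 * T2 $$ (i,j) + U2 $$ (i,j)"
    if i: "i < n" and j: "j < n" and r0: "\<rho>1 \<ge> 0" for i j
  proof -
    note d = D[OF i j]
    have r1: "1 - \<rho>1 \<ge> 0" using \<rho>1lt by simp
    from ge12 show ?thesis
    proof
      assume g: "ge_mat (mp_inv P1 * R1) (mp_inv P2 * R2)"
      have nm: "nonneg_mat (mp_inv P1 * R1 - mp_inv P2 * R2)" using g unfolding ge_mat_def by blast
      have d1: "i < dim_row (mp_inv P1 * R1 - mp_inv P2 * R2)" "j < dim_col (mp_inv P1 * R1 - mp_inv P2 * R2)"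
        using T1 T2 i j unfolding T1_def T2_def by auto
      have "(mp_inv P1 * R1 - mp_inv P2 * R2) $$ (i,j) \<ge> 0"
        by (rule nm[unfolded nonneg_mat_def, rule_format, OF d1])
      hence t: "T1 $$ (i,j) - T2 $$ (i,j) \<ge> 0" using minus_entry[OF T2[unfolded T2_def] i j, of "mp_inv P1 * R1"] unfolding T1_def T2_def by linarith
      have "(1 - \<rho>1) * (T1 $$ (i,j) - T2 $$ (i,j)) \<ge> 0" by (rule mult_nonneg_nonneg[OF r1 t])
      thus ?thesis using d by (simp add: algebra_simps)
    next
      assume g: "ge_mat (mp_inv P1 * S1) (mp_inv P2 * S2)"
      have S1: "mp_inv P1 * S1 \<in> carrier_mat n n" and S2: "mp_inv P2 * S2 \<in> carrier_mat n n"
        using f1 f2 by auto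
      have nm: "nonneg_mat (mp_inv P1 * S1 - mp_inv P2 * S2)" using g unfolding ge_mat_def by blast
      have d1: "i < dim_row (mp_inv P1 * S1 - mp_inv P2 * S2)" "j < dim_col (mp_inv P1 * S1 - mp_inv P2 * S2)"
        using S1 S2 i j by auto
      have "(mp_inv P1 * S1 - mp_inv P2 * S2) $$ (i,j) \<ge> 0"
        by (rule nm[unfolded nonneg_mat_def, rule_format, OF d1])
      hence t: "U2 $$ (i,j) - U1 $$ (i,j) \<ge> 0" using minus_entry[OF S2 i j, of "mp_inv P1 * S1"] S1 S2 i j unfolding U1_def U2_def
        by (simp del: index_mult_mat)
      have "(1 - \<rho>1) * (U2 $$ (i,j) - U1 $$ (i,j)) \<ge> 0" by (rule mult_nonneg_nonneg[OF r1 t])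
      moreover have "\<rho>1 * (T2 $$ (i,j) + U2 $$ (i,j) - (T1 $$ (i,j) + U1 $$ (i,j))) \<ge> 0"
        by (rule mult_nonneg_nonneg[OF r0], insert d, simp)
      ultimately show ?thesis by (simp add: algebra_simps)
    qed
  qed
  define N where "N = iter_mat n P2 R2 S2"
  have Nfb: "N = four_block_mat T2 U2 (1\<^sub>m n) (0\<^sub>m n n)"
    unfolding N_def iter_mat_def T2_def U2_def ..
  have N: "N \<in> carrier_mat (n+n) (n+n)" unfolding Nfb using T2 U2 by auto
  have \<rho>2: "real_spectral_radius (iter_mat n P2 R2 S2) = spectral_radius (map_mat complex_of_real N)"
    unfolding real_spectral_radius_def N_def ..
  have le: "\<rho>1 \<le> real_spectral_radius (iter_mat n P2 R2 S2)"
  proof (cases "\<rho>1 = 0")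
    case True
    have "spectral_radius (map_mat complex_of_real N) \<ge> 0" by (rule sr_nonneg[of _ "n+n"], insert N nn, auto)
    thus ?thesis using True \<rho>2 by simp
  next
    case False
    hence r0: "\<rho>1 > 0" using eq by simp
    from Wm_right[OF T1 U1 T1n U1n, of \<mu>] \<mu> obtain u where un: "\<And>i. i < n \<Longrightarrow> u i \<ge> 0"
      and up: "\<exists>i<n. u i > 0"
      and ui: "\<And>i. i < n \<Longrightarrow> \<rho>1 ^ 2 * u i \<le> \<rho>1 * (\<Sum>j<n. T1 $$ (i,j) * u j) + (\<Sum>j<n. U1 $$ (i,j) * u j)"
      unfolding spectrum_def eq by auto
    from up obtain i0 where i0: "i0 < n" and ui0: "u i0 > 0" by blast
    define z where "z j = (if j < n then \<rho>1 * u j else u (j - n))" for j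
    have zn: "z j \<ge> 0" if "j < n + n" for j using un that r0 unfolding z_def by auto
    have Nn: "N $$ (i,j) \<ge> 0" if i: "i < n + n" and j: "j < n + n" for i j
      using i j T2n U2n T2 U2 unfolding Nfb by auto
    have Nz: "\<rho>1 * z i \<le> (\<Sum>j<n+n. N $$ (i,j) * z j)" if i: "i < n + n" for i
    proof -
      have split: "(\<Sum>j<n+n. N $$ (i,j) * z j) = (\<Sum>j<n. N $$ (i,j) * z j) + (\<Sum>j<n. N $$ (i,n+j) * z (n+j))"
        by (rule sum_split_add)
      show ?thesis
      proof (cases "i < n")
        case True
        have "\<rho>1 * z i = \<rho>1 ^ 2 * u i" using True unfolding z_def by (simp add: power2_eq_square)
        also have "\<dots> \<le> \<rho>1 * (\<Sum>j<n. T1 $$ (i,j) * u j) + (\<Sum>j<n. U1 $$ (i,j) * u j)" by (rule ui[OF True])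
        also have "\<dots> = (\<Sum>j<n. (\<rho>1 * T1 $$ (i,j) + U1 $$ (i,j)) * u j)"
          by (simp add: sum_distrib_left sum.distrib algebra_simps)
        also have "\<dots> \<le> (\<Sum>j<n. (\<rho>1 * T2 $$ (i,j) + U2 $$ (i,j)) * u j)"
          by (rule sum_mono, rule mult_right_mono, insert key[OF True _ less_imp_le[OF r0]] un, auto)
        also have "\<dots> = (\<Sum>j<n. N $$ (i,j) * z j) + (\<Sum>j<n. N $$ (i,n+j) * z (n+j))"
          unfolding sum.distrib[symmetric]
          by (rule sum.cong, insert fb_entries(1,2)[OF T2 U2 True], auto simp: Nfb z_def algebra_simps)
        finally show ?thesis using split by simp
      next
        case False
        then obtain i' where ii: "i = n + i'" and i': "i' < n" using i
          by (metis add_less_imp_less_left le_Suc_ex not_less)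
        have "(\<Sum>j<n. N $$ (i,n+j) * z (n+j)) = 0"
          by (rule sum.neutral, insert fb_entries(4)[OF T2 U2 i'], auto simp: Nfb ii)
        moreover have "(\<Sum>j<n. N $$ (i,j) * z j) = (\<Sum>j<n. (if i' = j then \<rho>1 * u j else 0))"
          by (rule sum.cong, insert fb_entries(3)[OF T2 U2 i'], auto simp: Nfb ii z_def)
        moreover have "(\<Sum>j<n. (if i' = j then \<rho>1 * u j else 0)) = \<rho>1 * u i'" using i' by (simp add: sum.delta)
        ultimately show ?thesis using split ii unfolding z_def by simp
      qed
    qed
    have "\<rho>1 \<le> spectral_radius (map_mat complex_of_real N)"
      by (rule sr_lower[OF N Nn zn _ _ r0 Nz, of "n + i0"], insert i0 ui0, auto simp: z_def)
    thus ?thesis using \<rho>2 by simp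
  qed
  show ?thesis using le c2 unfolding \<rho>1_def by simp
qed


end
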